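(* Assume (H1) and (H2), and $I_T(0,0)>0$ for some $T>0$. Then for any $q,q'\in\mathcal R$, \[\lim_{\delta\to0}\limsup_{n\to\infty}\sup_{z\in E:|z-nq|<\delta n}\frac1n\log G\bigl(z,nB(q',\delta)\bigr)\ \le\ -\hat I(q,q').\]
   Context: Let $E\subset\mathbb R^d$ be unbounded and $(Z(t))_{t\ge0}$ a continuous-time strong Markov process on $E$ with right-continuous paths having left limits; $\mathbb P_z,\mathbb E_z$ denote probability and expectation given $Z(0)=z$. $G(z,B)=\int_0^\infty\mathbb P_z(Z(t)\in B)\,dt$, assumed finite for $z\in E$ and compact $B$. $Z^\varepsilon(t)=\varepsilon Z(t/\varepsilon)$. For $B\subset\mathbb R^d$ and $n>0$, $nB=\{nx:x\in B\}$; $B(x,r)$ is the open ball of center $x$ and radius $r$. (H1): for every $T>0$, the family $Z^\varepsilon(T)$ satisfies the weak LDP with a good rate function $I_T:\mathbb R^d\times\mathbb R^d\to[0,\infty]$, i.e. $I_T$ is lower semicontinuous; for every $q\in\mathbb R^d$ and open $O$, $\lim_{\delta\to0}\liminf_{\varepsilon\to0}\varepsilon\log\inf_{z\in E:|\varepsilon z-q|<\delta}\mathbb P_z(Z^\varepsilon(T)\in O)\ge-\inf_{q'\in O}I_T(q,q')$; and for every $q$ and compact $V$, $\lim_{\delta\to0}\limsup_{\varepsilon\to0}\varepsilon\log\sup_{z\in E:|\varepsilon z-q|<\delta}\mathbb P_z(Z^\varepsilon(T)\in V)\le-\inf_{q'\in V}I_T(q,q')$. (H2): $\hat\varphi(a)=\sup_{z\in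 E}\sup_{t\in[0,1]}\mathbb E_z(e^{a\cdot(Z(t)-z)})<\infty$ for every $a\in\mathbb R^d$. $\mathcal R$ is the set of all limits $\lim_{\varepsilon\to0}\varepsilon z_\varepsilon$ with $z_\varepsilon\in E$. $I(q,q')=\inf_{T>0}I_T(q,q')$; $\hat I(q,q')=I(q,q')$ if $q\ne q'$ and $\hat I(q,q)=0$. *)

theory Defs
  imports "HOL-Probability.Probability"
begin

text \<open>Lower semicontinuity of an extended-nonnegative-valued function (standard definition).\<close>
definition lsc :: "('b::topological_space \<Rightarrow> ennreal) \<Rightarrow> bool" where
  "lsc f \<longleftrightarrow> (\<forall>x. \<forall>c. c < f x \<longrightarrow> (\<forall>\<^sub>F y in nhds x. c < f y))"

text \<open>Natural filtration of the process Z on the sample space given by N.\<close>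
definition nat_filt :: "'w measure \<Rightarrow> (real \<Rightarrow> 'w \<Rightarrow> 'a::euclidean_space) \<Rightarrow> real \<Rightarrow> 'w set set" where
  "nat_filt N Z t = sets (sigma (space N)
      (\<Union>s\<in>{0..t}. {Z s -` B \<inter> space N | B. B \<in> sets borel}))"

text \<open>Its right-continuous version F_{t+}.\<close>
definition nat_filt_plus :: "'w measure \<Rightarrow> (real \<Rightarrow> 'w \<Rightarrow> 'a::euclidean_space) \<Rightarrow> real \<Rightarrow> 'w set set" where
  "nat_filt_plus N Z t = (\<Inter>u\<in>{t<..}. nat_filt N Z u)"

text \<open>Stopping times (possibly infinite) w.r.t. the right-continuous natural filtration.\<close>
definition is_stopping_time :: "'w measure \<Rightarrow> (real \<Rightarrow> 'w \<Rightarrow> 'a::euclidean_space) \<Rightarrow> ('w \<Rightarrow> ennreal) \<Rightarrow> bool" where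
  "is_stopping_time N Z \<tau> \<longleftrightarrow>
     (\<forall>t\<ge>0. {\<omega>\<in>space N. \<tau> \<omega> \<le> ennreal t} \<in> nat_filt_plus N Z t)"

text \<open>The sigma-algebra of events prior to the stopping time.\<close>
definition pre_tau :: "'w measure \<Rightarrow> (real \<Rightarrow> 'w \<Rightarrow> 'a::euclidean_space) \<Rightarrow> ('w \<Rightarrow> ennreal) \<Rightarrow> 'w set set" where
  "pre_tau N Z \<tau> = {A \<in> sets N. \<forall>t\<ge>0. A \<inter> {\<omega>\<in>space N. \<tau> \<omega> \<le> ennreal t} \<in> nat_filt_plus N Z t}"

text \<open>
  A continuous-time strong Markov process on E with right-continuous paths having left limits:
  sample space N (only its measurable structure is used), laws P z (= P_z) for starting points
  z in E, process Z t \<omega>.  The strong Markov property is stated for one future time s; applied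
  to the stopping times tau+s it yields the usual finite-dimensional version.
\<close>
definition strong_markov_cadlag ::
  "'a::euclidean_space set \<Rightarrow> 'w measure \<Rightarrow> ('a \<Rightarrow> 'w measure) \<Rightarrow> (real \<Rightarrow> 'w \<Rightarrow> 'a) \<Rightarrow> bool" where
  "strong_markov_cadlag E N P Z \<longleftrightarrow>
     (\<forall>z\<in>E. prob_space (P z) \<and> sets (P z) = sets N) \<and>
     (\<forall>z\<in>E. AE \<omega> in P z. Z 0 \<omega> = z) \<and>
     (\<forall>t\<ge>0. Z t \<in> borel_measurable N) \<and>
     (\<forall>\<omega>\<in>space N. \<forall>t\<ge>0. Z t \<omega> \<in> E) \<and>
     (\<forall>\<omega>\<in>space N. \<forall>t\<ge>0. ((\<lambda>s. Z s \<omega>) \<longlongrightarrow> Z t \<omega>) (at_right t)) \<and>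
     (\<forall>\<omega>\<in>space N. \<forall>t>0. \<exists>l. ((\<lambda>s. Z s \<omega>) \<longlongrightarrow> l) (at_left t)) \<and>
     (\<forall>s\<ge>0. \<forall>B\<in>sets borel.
        (\<lambda>z. emeasure (P z) {\<omega>\<in>space N. Z s \<omega> \<in> B}) \<in> borel_measurable (restrict_space borel E)) \<and>
     (\<forall>z\<in>E. \<forall>\<tau>. is_stopping_time N Z \<tau> \<longrightarrow> (\<forall>A\<in>pre_tau N Z \<tau>. \<forall>s\<ge>0. \<forall>B\<in>sets borel.
        emeasure (P z) {\<omega>\<in>A. \<tau> \<omega> < \<infinity> \<and> Z (enn2real (\<tau> \<omega>) + s) \<omega> \<in> B}
        = (\<integral>\<^sup>+ \<omega>. indicator {\<omega>\<in>A. \<tau> \<omega> < \<infinity>} \<omega> *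
              emeasure (P (Z (enn2real (\<tau> \<omega>)) \<omega>)) {\<omega>'\<in>space N. Z s \<omega>' \<in> B} \<partial>P z)))"

text \<open>Green measure G(z,B) = int_0^infty P_z(Z(t) in B) dt.\<close>
definition green :: "'w measure \<Rightarrow> ('a \<Rightarrow> 'w measure) \<Rightarrow> (real \<Rightarrow> 'w \<Rightarrow> 'a) \<Rightarrow> 'a \<Rightarrow> 'a set \<Rightarrow> ennreal" where
  "green N P Z z B = (\<integral>\<^sup>+ t. indicator {0..} t * emeasure (P z) {\<omega>\<in>space N. Z t \<omega> \<in> B} \<partial>lborel)"

text \<open>Logarithm on [0,infty] with log 0 = -infty, log infty = infty.\<close>
definition elog :: "ennreal \<Rightarrow> ereal" where
  "elog x = (if x = 0 then -\<infinity> else if x = \<infinity> then \<infinity> else ereal (ln (enn2real x)))"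

text \<open>The set R of all limits of eps * z_eps with z_eps in E, as eps -> 0+.\<close>
definition scaling_limits :: "'a::real_normed_vector set \<Rightarrow> 'a set" where
  "scaling_limits E = {q. \<exists>zz::real \<Rightarrow> 'a. (\<forall>\<epsilon>>0. zz \<epsilon> \<in> E) \<and> ((\<lambda>\<epsilon>. \<epsilon> *\<^sub>R zz \<epsilon>) \<longlongrightarrow> q) (at_right 0)}"

text \<open>(H1) weak LDP for Z^eps(T) = eps Z(T/eps), for every T>0.\<close>
definition H1 :: "'a::euclidean_space set \<Rightarrow> 'w measure \<Rightarrow> ('a \<Rightarrow> 'w measure) \<Rightarrow> (real \<Rightarrow> 'w \<Rightarrow> 'a)
                   \<Rightarrow> (real \<Rightarrow> 'a \<Rightarrow> 'a \<Rightarrow> ennreal) \<Rightarrow> bool" where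
  "H1 E N P Z I \<longleftrightarrow> (\<forall>T>0.
     lsc (\<lambda>p. I T (fst p) (snd p)) \<and>
     (\<forall>q U. open U \<longrightarrow>
        Liminf (at_right 0) (\<lambda>\<delta>. Liminf (at_right 0) (\<lambda>\<epsilon>. ereal \<epsilon> *
           elog (INF z\<in>{z\<in>E. norm (\<epsilon> *\<^sub>R z - q) < \<delta>}.
                   emeasure (P z) {\<omega>\<in>space N. \<epsilon> *\<^sub>R Z (T / \<epsilon>) \<omega> \<in> U})))
        \<ge> - enn2ereal (INF q'\<in>U. I T q q')) \<and>
     (\<forall>q V. compact V \<longrightarrow>
        Limsup (at_right 0) (\<lambda>\<delta>. Limsup (at_right 0) (\<lambda>\<epsilon>. ereal \<epsilon> *
           elog (SUP z\<in>{z\<in>E. norm (\<epsilon> *\<^sub>R z - q) < \<delta>}.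
                   emeasure (P z) {\<omega>\<in>space N. \<epsilon> *\<^sub>R Z (T / \<epsilon>) \<omega> \<in> V})))
        \<le> - enn2ereal (INF q'\<in>V. I T q q')))"

text \<open>(H2) uniform exponential moments of increments over times in [0,1].\<close>
definition H2 :: "'a::euclidean_space set \<Rightarrow> ('a \<Rightarrow> 'w measure) \<Rightarrow> (real \<Rightarrow> 'w \<Rightarrow> 'a) \<Rightarrow> bool" where
  "H2 E P Z \<longleftrightarrow> (\<forall>a. (SUP z\<in>E. SUP t\<in>{0..1}. \<integral>\<^sup>+ \<omega>. ennreal (exp (a \<bullet> (Z t \<omega> - z))) \<partial>P z) < \<infinity>)"

definition rateI :: "(real \<Rightarrow> 'a \<Rightarrow> 'a \<Rightarrow> ennreal) \<Rightarrow> 'a \<Rightarrow> 'a \<Rightarrow> ennreal" where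
  "rateI I q q' = (INF T\<in>{0<..}. I T q q')"

definition rateI_hat :: "(real \<Rightarrow> 'a \<Rightarrow> 'a \<Rightarrow> ennreal) \<Rightarrow> 'a \<Rightarrow> 'a \<Rightarrow> ennreal" where
  "rateI_hat I q q' = (if q = q' then 0 else rateI I q q')"

end

theory Submission
  imports Defs "HOL-Probability.Distributions" "HOL-Real_Asymp.Real_Asymp"
begin

lemma exp_int:
  fixes b :: real assumes b: "b > 0"
  shows "(\<integral>\<^sup>+t. ennreal (indicator {0..} t * exp (-(b*t))) \<partial>lborel) = ennreal (1/b)"
proof -
  have 1: "prob_space (density lborel (exponential_density b))" using prob_space_exponential_density[OF b] .
  have "emeasure (density lborel (exponential_density b)) UNIV = 1"
    using prob_space.emeasure_space_1[OF 1] by simp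
  then have "(\<integral>\<^sup>+t. ennreal (exponential_density b t) \<partial>lborel) = 1"
    by (subst (asm) emeasure_density) (auto simp: erlang_density_def)
  moreover have "(\<lambda>t. ennreal (exponential_density b t)) = (\<lambda>t. ennreal b * ennreal (indicator {0..} t * exp (-(b*t))))"
    using b by (auto simp: erlang_density_def fun_eq_iff indicator_def ennreal_mult[symmetric] mult_ac)
  ultimately have "ennreal b * (\<integral>\<^sup>+t. ennreal (indicator {0..} t * exp (-(b*t))) \<partial>lborel) = 1"
    by (subst nn_integral_cmult[symmetric]) auto
  then have "(\<integral>\<^sup>+t. ennreal (indicator {0..} t * exp (-(b*t))) \<partial>lborel) = 1 / ennreal b"
  proof -
    fix X assume "ennreal b * X = 1"
    moreover have "X = (X * ennreal b) / ennreal b" using b by (simp add: ennreal_mult_divide_eq)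
    ultimately show "X = 1 / ennreal b" by (simp add: mult.commute)
  qed
  then show ?thesis using b divide_ennreal[of 1 b] by simp
qed

lemma sm1:
  assumes m: "strong_markov_cadlag E N P Z"
  shows "\<forall>z\<in>E. prob_space (P z) \<and> sets (P z) = sets N"
  using m unfolding strong_markov_cadlag_def by (elim conjE) assumption

lemma sm2:
  assumes m: "strong_markov_cadlag E N P Z"
  shows "\<forall>z\<in>E. AE \<omega> in P z. Z 0 \<omega> = z"
  using m unfolding strong_markov_cadlag_def by (elim conjE) assumption

lemma sm3:
  assumes m: "strong_markov_cadlag E N P Z"
  shows "\<forall>t\<ge>0. Z t \<in> borel_measurable N"
  using m unfolding strong_markov_cadlag_def by (elim conjE) assumption

lemma sm4:
  assumes m: "strong_markov_cadlag E N P Z"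
  shows "\<forall>\<omega>\<in>space N. \<forall>t\<ge>0. Z t \<omega> \<in> E"
  using m unfolding strong_markov_cadlag_def by (elim conjE) assumption

lemma sm5:
  assumes m: "strong_markov_cadlag E N P Z"
  shows "\<forall>s\<ge>0. \<forall>B\<in>sets borel.
        (\<lambda>z. emeasure (P z) {\<omega>\<in>space N. Z s \<omega> \<in> B}) \<in> borel_measurable (restrict_space borel E)"
  using m unfolding strong_markov_cadlag_def by (elim conjE) assumption

lemma sm6:
  assumes m: "strong_markov_cadlag E N P Z"
  shows "\<forall>z\<in>E. \<forall>\<tau>. is_stopping_time N Z \<tau> \<longrightarrow> (\<forall>A\<in>pre_tau N Z \<tau>. \<forall>s\<ge>0. \<forall>B\<in>sets borel.
        emeasure (P z) {\<omega>\<in>A. \<tau> \<omega> < \<infinity> \<and> Z (enn2real (\<tau> \<omega>) + s) \<omega> \<in> B}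
        = (\<integral>\<^sup>+ \<omega>. indicator {\<omega>\<in>A. \<tau> \<omega> < \<infinity>} \<omega> *
              emeasure (P (Z (enn2real (\<tau> \<omega>)) \<omega>)) {\<omega>'\<in>space N. Z s \<omega>' \<in> B} \<partial>P z))"
  using m unfolding strong_markov_cadlag_def by (elim conjE) assumption

lemma sm_basic:
  assumes m: "strong_markov_cadlag E N P Z" and z: "z \<in> E"
  shows "prob_space (P z)" "sets (P z) = sets N" "space (P z) = space N"
    "AE \<omega> in P z. Z 0 \<omega> = z"
proof -
  show "prob_space (P z)" "sets (P z) = sets N" using sm1[OF m] z by blast+
  show "AE \<omega> in P z. Z 0 \<omega> = z" using sm2[OF m] z by blast
  show "space (P z) = space N" using sm1[OF m] z sets_eq_imp_space_eq by blast
qed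

lemma sm_meas:
  assumes m: "strong_markov_cadlag E N P Z" and t: "t \<ge> 0"
  shows "Z t \<in> borel_measurable N"
  using sm3[OF m] t by blast

lemma sm_meas_P:
  assumes m: "strong_markov_cadlag E N P Z" and t: "t \<ge> 0" and z: "z \<in> E"
  shows "Z t \<in> borel_measurable (P z)"
  using sm_meas[OF m t] measurable_cong_sets[OF sm_basic(2)[OF m z] refl] by blast

lemma sm_inE:
  assumes m: "strong_markov_cadlag E N P Z" and t: "t \<ge> 0" and w: "\<omega> \<in> space N"
  shows "Z t \<omega> \<in> E"
  using sm4[OF m] t w by blast

lemma sm_kernel:
  assumes m: "strong_markov_cadlag E N P Z" and s: "s \<ge> 0" and B: "B \<in> sets borel"
  shows "(\<lambda>z. emeasure (P z) {\<omega>\<in>space N. Z s \<omega> \<in> B}) \<in> borel_measurable (restrict_space borel E)"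
  using sm5[OF m] s B by blast

lemma nat_filt_top_empty:
  "space N \<in> nat_filt N Z u" "{} \<in> nat_filt N Z u"
proof -
  let ?M = "sigma (space N) (\<Union>s\<in>{0..u}. {Z s -` B \<inter> space N | B. B \<in> sets borel})"
  have "space ?M \<in> sets ?M" by (rule sets.top)
  then show "space N \<in> nat_filt N Z u" unfolding nat_filt_def by (simp only: space_measure_of_conv)
  show "{} \<in> nat_filt N Z u" unfolding nat_filt_def by (rule sets.empty_sets)
qed

lemma const_stopping:
  assumes s: "s \<ge> 0"
  shows "is_stopping_time N Z (\<lambda>_. ennreal s)"
    and "space N \<in> pre_tau N Z (\<lambda>_. ennreal s)"
proof -
  have key: "{\<omega>\<in>space N. ennreal s \<le> ennreal t} \<in> nat_filt_plus N Z t" for t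
  proof (cases "ennreal s \<le> ennreal t")
    case True
    then have e: "{\<omega>\<in>space N. ennreal s \<le> ennreal t} = space N" by blast
    show ?thesis unfolding nat_filt_plus_def e using nat_filt_top_empty(1) by blast
  next
    case False
    then have e: "{\<omega>\<in>space N. ennreal s \<le> ennreal t} = {}" by blast
    show ?thesis unfolding nat_filt_plus_def e using nat_filt_top_empty(2) by blast
  qed
  show "is_stopping_time N Z (\<lambda>_. ennreal s)"
    unfolding is_stopping_time_def using key by blast
  have "space N \<inter> {\<omega>\<in>space N. ennreal s \<le> ennreal t} = {\<omega>\<in>space N. ennreal s \<le> ennreal t}" for t
    by blast
  then have "space N \<inter> {\<omega>\<in>space N. ennreal s \<le> ennreal t} \<in> nat_filt_plus N Z t" for t
    using key by metis
  then show "space N \<in> pre_tau N Z (\<lambda>_. ennreal s)"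
    unfolding pre_tau_def mem_Collect_eq using sets.top[of N] by blast
qed

lemma markov_set:
  assumes m: "strong_markov_cadlag E N P Z" and y: "y \<in> E" and s: "s \<ge> 0" and u: "u \<ge> 0"
    and B: "B \<in> sets borel"
  shows "emeasure (P y) {\<omega>\<in>space N. Z (s+u) \<omega> \<in> B}
     = (\<integral>\<^sup>+\<omega>. emeasure (P (Z s \<omega>)) {\<omega>'\<in>space N. Z u \<omega>' \<in> B} \<partial>P y)"
proof -
  have "emeasure (P y) {\<omega>\<in>space N. ennreal s < \<infinity> \<and> Z (enn2real (ennreal s) + u) \<omega> \<in> B}
        = (\<integral>\<^sup>+ \<omega>. indicator {\<omega>\<in>space N. ennreal s < \<infinity>} \<omega> *
              emeasure (P (Z (enn2real (ennreal s)) \<omega>)) {\<omega>'\<in>space N. Z u \<omega>' \<in> B} \<partial>P y)"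
    using sm6[OF m] y const_stopping(1)[OF s] const_stopping(2)[OF s] u B by blast
  moreover have "enn2real (ennreal s) = s" using s by simp
  moreover have "{\<omega>\<in>space N. ennreal s < \<infinity> \<and> Z (s + u) \<omega> \<in> B} = {\<omega>\<in>space N. Z (s+u) \<omega> \<in> B}"
    by simp
  moreover have "{\<omega>\<in>space N. ennreal s < \<infinity>} = space N" by simp
  ultimately have "emeasure (P y) {\<omega>\<in>space N. Z (s+u) \<omega> \<in> B}
     = (\<integral>\<^sup>+ \<omega>. indicator (space N) \<omega> * emeasure (P (Z s \<omega>)) {\<omega>'\<in>space N. Z u \<omega>' \<in> B} \<partial>P y)"
    by simp
  also have "\<dots> = (\<integral>\<^sup>+\<omega>. emeasure (P (Z s \<omega>)) {\<omega>'\<in>space N. Z u \<omega>' \<in> B} \<partial>P y)"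
    by (rule nn_integral_cong) (simp add: sm_basic(3)[OF m y])
  finally show ?thesis .
qed

lemma markov_fun:
  assumes m: "strong_markov_cadlag E N P Z" and y: "y \<in> E" and s: "s \<ge> 0" and u: "u \<ge> 0"
    and f: "f \<in> borel_measurable borel"
  shows "(\<integral>\<^sup>+\<omega>. f (Z (s+u) \<omega>) \<partial>P y) = (\<integral>\<^sup>+\<omega>. (\<integral>\<^sup>+\<omega>'. f (Z u \<omega>') \<partial>P (Z s \<omega>)) \<partial>P y)"
proof -
  define K where "K x = distr (P x) borel (Z u)" for x
  define \<nu> where "\<nu> = distr (P y) (restrict_space borel E) (Z s)"
  have Kev: "emeasure (K x) A = emeasure (P x) {\<omega>\<in>space N. Z u \<omega> \<in> A}" if "x \<in> E" "A \<in> sets borel" for x A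
  proof -
    have "emeasure (K x) A = emeasure (P x) (Z u -` A \<inter> space (P x))"
      unfolding K_def using that sm_meas_P[OF m u that(1)] by (simp add: emeasure_distr)
    also have "Z u -` A \<inter> space (P x) = {\<omega>\<in>space N. Z u \<omega> \<in> A}"
      using sm_basic(3)[OF m that(1)] by auto
    finally show ?thesis .
  qed
  have Kmeas: "K \<in> measurable (restrict_space borel E) (subprob_algebra borel)"
  proof (rule measurable_subprob_algebra)
    fix a assume a: "a \<in> space (restrict_space borel E)"
    then have aE: "a \<in> E" by (simp add: space_restrict_space)
    show "subprob_space (K a)" unfolding K_def
      using prob_space.prob_space_distr[OF sm_basic(1)[OF m aE] sm_meas_P[OF m u aE]]
      by (simp add: prob_space_imp_subprob_space)
    show "sets (K a) = sets borel" unfolding K_def by simp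
  next
    fix A :: "'a set" assume A: "A \<in> sets borel"
    have "(\<lambda>z. emeasure (P z) {\<omega>\<in>space N. Z u \<omega> \<in> A}) \<in> borel_measurable (restrict_space borel E)"
      by (rule sm_kernel[OF m u A])
    then show "(\<lambda>a. emeasure (K a) A) \<in> borel_measurable (restrict_space borel E)"
      by (rule measurable_cong[THEN iffD1, rotated]) (simp add: Kev A space_restrict_space)
  qed
  have Zs: "Z s \<in> measurable (P y) (restrict_space borel E)"
    by (rule measurable_restrict_space2) (auto simp: sm_basic(3)[OF m y] sm_inE[OF m s] sm_meas_P[OF m s y])
  have spnu: "space \<nu> \<noteq> {}" unfolding \<nu>_def using y by (auto simp: space_restrict_space)
  have Kmeas': "K \<in> measurable \<nu> (subprob_algebra borel)"
    using Kmeas measurable_cong_sets[of \<nu> "restrict_space borel E" "subprob_algebra borel" "subprob_algebra borel"]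
    unfolding \<nu>_def by simp
  have eq: "distr (P y) borel (Z (s+u)) = \<nu> \<bind> K"
  proof (rule measure_eqI)
    show "sets (distr (P y) borel (Z (s + u))) = sets (\<nu> \<bind> K)"
    proof -
      have "sets (\<nu> \<bind> K) = sets borel" by (rule sets_bind[OF _ spnu]) (simp add: K_def)
      then show ?thesis by simp
    qed
  next
    fix X assume "X \<in> sets (distr (P y) borel (Z (s + u)))"
    then have X: "X \<in> sets borel" by simp
    have "emeasure (\<nu> \<bind> K) X = (\<integral>\<^sup>+x. emeasure (K x) X \<partial>\<nu>)"
      by (rule emeasure_bind[OF spnu Kmeas' X])
    also have "\<dots> = (\<integral>\<^sup>+\<omega>. emeasure (K (Z s \<omega>)) X \<partial>P y)"
      unfolding \<nu>_def
      by (rule nn_integral_distr[OF Zs]) (rule measurable_compose[OF Kmeas'[unfolded \<nu>_def] measurable_emeasure_subprob_algebra[OF X]])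
    also have "\<dots> = (\<integral>\<^sup>+\<omega>. emeasure (P (Z s \<omega>)) {\<omega>'\<in>space N. Z u \<omega>' \<in> X} \<partial>P y)"
      by (rule nn_integral_cong) (simp add: Kev X sm_inE[OF m s] sm_basic(3)[OF m y])
    also have "\<dots> = emeasure (P y) {\<omega>\<in>space N. Z (s+u) \<omega> \<in> X}"
      by (rule markov_set[OF m y s u X, symmetric])
    also have "\<dots> = emeasure (distr (P y) borel (Z (s + u))) X"
      using s u X sm_meas_P[OF m _ y, of "s+u"]
      by (subst emeasure_distr) (auto simp: sm_basic(3)[OF m y] intro!: arg_cong[where f="emeasure (P y)"])
    finally show "emeasure (distr (P y) borel (Z (s + u))) X = emeasure (\<nu> \<bind> K) X" by simp
  qed
  have "(\<integral>\<^sup>+\<omega>. f (Z (s+u) \<omega>) \<partial>P y) = (\<integral>\<^sup>+x. f x \<partial>distr (P y) borel (Z (s+u)))"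
    using s u by (subst nn_integral_distr) (auto intro: sm_meas_P[OF m _ y] f)
  also have "\<dots> = (\<integral>\<^sup>+x. \<integral>\<^sup>+v. f v \<partial>K x \<partial>\<nu>)"
    unfolding eq by (rule nn_integral_bind[OF f Kmeas'])
  also have "\<dots> = (\<integral>\<^sup>+\<omega>. \<integral>\<^sup>+v. f v \<partial>K (Z s \<omega>) \<partial>P y)"
    unfolding \<nu>_def
    by (rule nn_integral_distr[OF Zs])
       (rule measurable_compose[OF Kmeas'[unfolded \<nu>_def] nn_integral_measurable_subprob_algebra[OF f]])
  also have "\<dots> = (\<integral>\<^sup>+\<omega>. (\<integral>\<^sup>+\<omega>'. f (Z u \<omega>') \<partial>P (Z s \<omega>)) \<partial>P y)"
  proof (rule nn_integral_cong)
    fix \<omega> assume "\<omega> \<in> space (P y)"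
    then have x: "Z s \<omega> \<in> E" using sm_inE[OF m s] sm_basic(3)[OF m y] by auto
    show "(\<integral>\<^sup>+v. f v \<partial>K (Z s \<omega>)) = (\<integral>\<^sup>+\<omega>'. f (Z u \<omega>') \<partial>P (Z s \<omega>))"
      unfolding K_def by (rule nn_integral_distr[OF sm_meas_P[OF m u x]]) (metis f measurable_cong_sets sets_distr)
  qed
  finally show ?thesis .
qed

definition phi :: "'a::euclidean_space set \<Rightarrow> ('a \<Rightarrow> 'w measure) \<Rightarrow> (real \<Rightarrow> 'w \<Rightarrow> 'a) \<Rightarrow> 'a \<Rightarrow> ennreal" where
  "phi E P Z a = (SUP z\<in>E. SUP t\<in>{0..1}. \<integral>\<^sup>+ \<omega>. ennreal (exp (a \<bullet> (Z t \<omega> - z))) \<partial>P z)"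

lemma phi_upper:
  assumes "y \<in> E" "t \<in> {0..1}"
  shows "(\<integral>\<^sup>+ \<omega>. ennreal (exp (a \<bullet> (Z t \<omega> - y))) \<partial>P y) \<le> phi E P Z a"
  unfolding phi_def using assms by (intro SUP_upper2[of y] SUP_upper) auto

lemma phi_ge1:
  assumes m: "strong_markov_cadlag E N P Z" and y: "y \<in> E"
  shows "1 \<le> phi E P Z a"
proof -
  have "(\<integral>\<^sup>+ \<omega>. ennreal (exp (a \<bullet> (Z 0 \<omega> - y))) \<partial>P y) = (\<integral>\<^sup>+ \<omega>. 1 \<partial>P y)"
    by (rule nn_integral_cong_AE) (use sm_basic(4)[OF m y] in \<open>auto elim!: AE_mp\<close>)
  also have "\<dots> = 1" using prob_space.emeasure_space_1[OF sm_basic(1)[OF m y]] by simp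
  finally show ?thesis using phi_upper[OF y, where t=0 and Z=Z and a=a and P=P] by simp
qed

lemma exp_meas:
  assumes m: "strong_markov_cadlag E N P Z" and t: "t \<ge> 0" and z: "z \<in> E"
  shows "(\<lambda>\<omega>. ennreal (exp (a \<bullet> (Z t \<omega> - y)))) \<in> borel_measurable (P z)"
  using sm_meas_P[OF m t z] by measurable

lemma iter:
  assumes m: "strong_markov_cadlag E N P Z"
  shows "y \<in> E \<Longrightarrow> u \<in> {0..real (Suc k)} \<Longrightarrow>
     (\<integral>\<^sup>+ \<omega>. ennreal (exp (a \<bullet> (Z u \<omega> - y))) \<partial>P y) \<le> phi E P Z a ^ Suc k"
proof (induction k arbitrary: y u)
  case 0
  then show ?case using phi_upper[where y=y and E=E and t=u and a=a and Z=Z and P=P] by simp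
next
  case (Suc k)
  note y = Suc.prems(1)
  have ph1: "1 \<le> phi E P Z a" by (rule phi_ge1[OF m y])
  show ?case
  proof (cases "u \<le> 1")
    case True
    then have "(\<integral>\<^sup>+ \<omega>. ennreal (exp (a \<bullet> (Z u \<omega> - y))) \<partial>P y) \<le> phi E P Z a"
      using phi_upper[where y=y and E=E and t=u and a=a and Z=Z and P=P] y Suc.prems(2) by simp
    also have "\<dots> \<le> phi E P Z a ^ Suc (Suc k)"
      using power_increasing[of 1 "Suc (Suc k)" "phi E P Z a"] ph1 by simp
    finally show ?thesis .
  next
    case False
    define u' where "u' = u - 1"
    have u': "u' \<in> {0..real (Suc k)}" "u = 1 + u'" using False Suc.prems(2) by (auto simp: u'_def)
    let ?f = "\<lambda>x. ennreal (exp (a \<bullet> (x - y)))"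
    have f: "?f \<in> borel_measurable borel" by measurable
    have "(\<integral>\<^sup>+ \<omega>. ennreal (exp (a \<bullet> (Z u \<omega> - y))) \<partial>P y)
        = (\<integral>\<^sup>+\<omega>. (\<integral>\<^sup>+\<omega>'. ?f (Z u' \<omega>') \<partial>P (Z 1 \<omega>)) \<partial>P y)"
      unfolding u'(2) using markov_fun[OF m y _ _ f, of 1 u'] u'(1) by simp
    also have "\<dots> \<le> (\<integral>\<^sup>+\<omega>. ennreal (exp (a \<bullet> (Z 1 \<omega> - y))) * phi E P Z a ^ Suc k \<partial>P y)"
    proof (rule nn_integral_mono)
      fix \<omega> assume "\<omega> \<in> space (P y)"
      then have x: "Z 1 \<omega> \<in> E" using sm_inE[OF m, of 1 \<omega>] sm_basic(3)[OF m y] by auto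
      define x where "x = Z 1 \<omega>"
      have "(\<integral>\<^sup>+\<omega>'. ?f (Z u' \<omega>') \<partial>P x)
          = (\<integral>\<^sup>+\<omega>'. ennreal (exp (a \<bullet> (x - y))) * ennreal (exp (a \<bullet> (Z u' \<omega>' - x))) \<partial>P x)"
        by (rule nn_integral_cong) (simp add: ennreal_mult[symmetric] exp_add[symmetric] inner_diff_right)
      also have "\<dots> = ennreal (exp (a \<bullet> (x - y))) * (\<integral>\<^sup>+\<omega>'. ennreal (exp (a \<bullet> (Z u' \<omega>' - x))) \<partial>P x)"
        by (rule nn_integral_cmult) (rule exp_meas[OF m _ x[folded x_def]], use u' in simp)
      also have "\<dots> \<le> ennreal (exp (a \<bullet> (x - y))) * phi E P Z a ^ Suc k"
        by (intro mult_left_mono Suc.IH[OF x[folded x_def] u'(1)]) simp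
      finally show "(\<integral>\<^sup>+\<omega>'. ?f (Z u' \<omega>') \<partial>P (Z 1 \<omega>)) \<le> ennreal (exp (a \<bullet> (Z 1 \<omega> - y))) * phi E P Z a ^ Suc k"
        unfolding x_def .
    qed
    also have "\<dots> = (\<integral>\<^sup>+\<omega>. ennreal (exp (a \<bullet> (Z 1 \<omega> - y))) \<partial>P y) * phi E P Z a ^ Suc k"
      by (rule nn_integral_multc) (rule exp_meas[OF m _ y], simp)
    also have "\<dots> \<le> phi E P Z a * phi E P Z a ^ Suc k"
      by (intro mult_right_mono phi_upper[OF y]) auto
    finally show ?thesis by simp
  qed
qed

lemma markov_exp_bound:
  fixes g :: "'w \<Rightarrow> real"
  assumes g: "g \<in> borel_measurable M" and th: "\<theta> \<ge> 0"
  shows "emeasure M {\<omega>\<in>space M. c \<le> g \<omega>} \<le> ennreal (exp (-\<theta>*c)) * (\<integral>\<^sup>+\<omega>. ennreal (exp (\<theta> * g \<omega>)) \<partial>M)"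
proof -
  have S: "{\<omega>\<in>space M. c \<le> g \<omega>} \<in> sets M" using g by measurable
  have "emeasure M {\<omega>\<in>space M. c \<le> g \<omega>} = (\<integral>\<^sup>+\<omega>. indicator {\<omega>\<in>space M. c \<le> g \<omega>} \<omega> \<partial>M)"
    using S by simp
  also have "\<dots> \<le> (\<integral>\<^sup>+\<omega>. ennreal (exp (-\<theta>*c)) * ennreal (exp (\<theta> * g \<omega>)) \<partial>M)"
  proof (rule nn_integral_mono)
    fix \<omega> assume "\<omega> \<in> space M"
    show "indicator {\<omega>\<in>space M. c \<le> g \<omega>} \<omega> \<le> ennreal (exp (-\<theta>*c)) * ennreal (exp (\<theta> * g \<omega>))"
    proof (cases "c \<le> g \<omega>")
      case True
      then have "0 \<le> -\<theta>*c + \<theta> * g \<omega>" using th by (simp add: algebra_simps mult_left_mono)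
      then have "1 \<le> exp (-\<theta>*c) * exp (\<theta> * g \<omega>)" by (simp add: exp_add[symmetric])
      then show ?thesis by (simp add: indicator_def ennreal_mult[symmetric])
    qed (simp add: indicator_def)
  qed
  also have "\<dots> = ennreal (exp (-\<theta>*c)) * (\<integral>\<^sup>+\<omega>. ennreal (exp (\<theta> * g \<omega>)) \<partial>M)"
    by (rule nn_integral_cmult) (use g in measurable)
  finally show ?thesis .
qed

lemma norm_big_coord:
  fixes v :: "'a::euclidean_space"
  assumes "r \<le> norm v"
  shows "\<exists>i\<in>Basis. r / DIM('a) \<le> \<bar>v \<bullet> i\<bar>"
proof (rule ccontr)
  assume "\<not> ?thesis"
  then have "\<forall>i\<in>Basis. \<bar>v \<bullet> i\<bar> < r / DIM('a)" by auto
  then have "(\<Sum>i\<in>Basis. \<bar>v \<bullet> i\<bar>) < (\<Sum>i\<in>(Basis::'a set). r / DIM('a))"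
    by (intro sum_strict_mono) auto
  also have "\<dots> = r" by simp
  finally show False using norm_le_l1[of v] assms by simp
qed

lemma chernoff:
  fixes E :: "'a::euclidean_space set" and \<Phi> :: real
  assumes m: "strong_markov_cadlag E N P Z" and y: "y \<in> E" and u: "u \<in> {0..real (Suc k)}"
    and th: "\<theta> \<ge> 0" and Ph: "\<Phi> \<ge> 0"
    and phb: "\<forall>i\<in>Basis. phi E P Z (\<theta> *\<^sub>R i) \<le> ennreal \<Phi> \<and> phi E P Z (-(\<theta> *\<^sub>R i)) \<le> ennreal \<Phi>"
  shows "emeasure (P y) {\<omega>\<in>space N. r \<le> norm (Z u \<omega> - y)}
      \<le> ennreal (2 * DIM('a) * \<Phi> ^ Suc k * exp (-\<theta>*(r/DIM('a))))"
proof -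
  let ?c = "r / DIM('a)"
  define A where "A i = {\<omega>\<in>space (P y). ?c \<le> (Z u \<omega> - y) \<bullet> i}" for i
  define B where "B i = {\<omega>\<in>space (P y). ?c \<le> - ((Z u \<omega> - y) \<bullet> i)}" for i
  have u0: "u \<ge> 0" using u by simp
  have meas: "(\<lambda>\<omega>. (Z u \<omega> - y) \<bullet> i) \<in> borel_measurable (P y)" for i
    using sm_meas_P[OF m u0 y] by measurable
  have AB: "A i \<in> sets (P y)" "B i \<in> sets (P y)" for i
    unfolding A_def B_def using meas[of i] by measurable
  have bnd: "emeasure (P y) (A i) \<le> ennreal (exp (-\<theta>*?c) * \<Phi> ^ Suc k)"
     "emeasure (P y) (B i) \<le> ennreal (exp (-\<theta>*?c) * \<Phi> ^ Suc k)" if i: "i \<in> Basis" for i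
  proof -
    have "emeasure (P y) (A i) \<le> ennreal (exp (-\<theta>*?c)) * (\<integral>\<^sup>+\<omega>. ennreal (exp (\<theta> * ((Z u \<omega> - y) \<bullet> i))) \<partial>P y)"
      unfolding A_def by (rule markov_exp_bound[OF meas th])
    also have "(\<integral>\<^sup>+\<omega>. ennreal (exp (\<theta> * ((Z u \<omega> - y) \<bullet> i))) \<partial>P y)
        = (\<integral>\<^sup>+\<omega>. ennreal (exp ((\<theta> *\<^sub>R i) \<bullet> (Z u \<omega> - y))) \<partial>P y)"
      by (simp add: inner_commute)
    also have "\<dots> \<le> phi E P Z (\<theta> *\<^sub>R i) ^ Suc k" by (rule iter[OF m y u])
    also have "\<dots> \<le> ennreal \<Phi> ^ Suc k" using phb i by (intro power_mono) auto
    finally show "emeasure (P y) (A i) \<le> ennreal (exp (-\<theta>*?c) * \<Phi> ^ Suc k)"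
      using Ph by (simp add: ennreal_mult ennreal_power mult_left_mono)
    have "emeasure (P y) (B i) \<le> ennreal (exp (-\<theta>*?c)) * (\<integral>\<^sup>+\<omega>. ennreal (exp (\<theta> * (- ((Z u \<omega> - y) \<bullet> i)))) \<partial>P y)"
      unfolding B_def by (rule markov_exp_bound[OF _ th]) (use meas[of i] in measurable)
    also have "(\<integral>\<^sup>+\<omega>. ennreal (exp (\<theta> * (- ((Z u \<omega> - y) \<bullet> i)))) \<partial>P y)
        = (\<integral>\<^sup>+\<omega>. ennreal (exp ((-(\<theta> *\<^sub>R i)) \<bullet> (Z u \<omega> - y))) \<partial>P y)"
      by (simp add: inner_commute)
    also have "\<dots> \<le> phi E P Z (-(\<theta> *\<^sub>R i)) ^ Suc k" by (rule iter[OF m y u])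
    also have "\<dots> \<le> ennreal \<Phi> ^ Suc k" using phb i by (intro power_mono) auto
    finally show "emeasure (P y) (B i) \<le> ennreal (exp (-\<theta>*?c) * \<Phi> ^ Suc k)"
      using Ph by (simp add: ennreal_mult ennreal_power mult_left_mono)
  qed
  have sub: "{\<omega>\<in>space N. r \<le> norm (Z u \<omega> - y)} \<subseteq> (\<Union>i\<in>Basis. A i \<union> B i)"
  proof
    fix \<omega> assume w: "\<omega> \<in> {\<omega>\<in>space N. r \<le> norm (Z u \<omega> - y)}"
    then obtain i where i: "i \<in> Basis" "?c \<le> \<bar>(Z u \<omega> - y) \<bullet> i\<bar>" using norm_big_coord by blast
    then show "\<omega> \<in> (\<Union>i\<in>Basis. A i \<union> B i)" using w sm_basic(3)[OF m y]
      unfolding A_def B_def by (cases "0 \<le> (Z u \<omega> - y) \<bullet> i") auto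
  qed
  have "emeasure (P y) {\<omega>\<in>space N. r \<le> norm (Z u \<omega> - y)} \<le> emeasure (P y) (\<Union>i\<in>Basis. A i \<union> B i)"
    by (rule emeasure_mono[OF sub]) (use AB in auto)
  also have "\<dots> \<le> (\<Sum>i\<in>Basis. emeasure (P y) (A i \<union> B i))"
    by (rule emeasure_subadditive_finite) (use AB in auto)
  also have "\<dots> \<le> (\<Sum>i\<in>(Basis::'a set). ennreal (2 * (exp (-\<theta>*?c) * \<Phi> ^ Suc k)))"
  proof (rule sum_mono)
    fix i :: 'a assume i: "i \<in> Basis"
    have "emeasure (P y) (A i \<union> B i) \<le> emeasure (P y) (A i) + emeasure (P y) (B i)"
      by (rule emeasure_subadditive) (use AB in auto)
    also have "\<dots> \<le> ennreal (exp (-\<theta>*?c) * \<Phi> ^ Suc k) + ennreal (exp (-\<theta>*?c) * \<Phi> ^ Suc k)"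
      by (intro add_mono bnd i)
    also have "\<dots> = ennreal (2 * (exp (-\<theta>*?c) * \<Phi> ^ Suc k))"
      using Ph by (simp add: ennreal_plus[symmetric] del: ennreal_plus)
    finally show "emeasure (P y) (A i \<union> B i) \<le> ennreal (2 * (exp (-\<theta>*?c) * \<Phi> ^ Suc k))" .
  qed
  also have "\<dots> = ennreal (2 * DIM('a) * \<Phi> ^ Suc k * exp (-\<theta>*?c))"
    using Ph by (simp add: ennreal_of_nat_eq_real_of_nat ennreal_mult[symmetric] mult_ac)
  finally show ?thesis .
qed

lemma elog_mono:
  assumes xy: "x \<le> y" shows "elog x \<le> elog y"
proof (cases "x = 0")
  case True then show ?thesis by (simp add: elog_def)
next
  case x0: False
  show ?thesis
  proof (cases "y = \<infinity>")
    case True then show ?thesis by (simp add: elog_def)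
  next
    case yt: False
    then have xt: "x \<noteq> \<infinity>" using xy by (auto simp: top_unique)
    have y0: "y \<noteq> 0" using x0 xy by auto
    have px: "enn2real x > 0" using x0 xt by (simp add: enn2real_positive_iff less_top[symmetric] zero_less_iff_neq_zero)
    have "enn2real x \<le> enn2real y" using xy yt by (simp add: enn2real_mono less_top[symmetric])
    then have "ln (enn2real x) \<le> ln (enn2real y)" using px by simp
    then show ?thesis using x0 xt y0 yt by (simp add: elog_def)
  qed
qed

lemma elog_le_ln:
  assumes "x \<le> ennreal B" "B > 0"
  shows "elog x \<le> ereal (ln B)"
proof -
  have "elog x \<le> elog (ennreal B)" by (rule elog_mono[OF assms(1)])
  also have "\<dots> = ereal (ln B)" using assms(2) by (simp add: elog_def)
  finally show ?thesis .
qed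

lemma elog_bound:
  assumes e: "\<epsilon> > 0" and lt: "ereal \<epsilon> * elog x < ereal c"
  shows "x \<le> ennreal (exp (c / \<epsilon>))"
proof (cases "x = 0")
  case True then show ?thesis by simp
next
  case False
  show ?thesis
  proof (cases "x = \<infinity>")
    case True
    then show ?thesis using lt e by (simp add: elog_def)
  next
    case False2: False
    then have ex: "elog x = ereal (ln (enn2real x))" using False by (simp add: elog_def)
    have pos: "enn2real x > 0" using False False2 by (simp add: enn2real_positive_iff less_top[symmetric] zero_less_iff_neq_zero)
    from lt ex have "\<epsilon> * ln (enn2real x) < c" by simp
    then have "ln (enn2real x) < c / \<epsilon>" using e by (simp add: field_simps)
    then have "exp (ln (enn2real x)) < exp (c / \<epsilon>)" by simp
    then have "enn2real x < exp (c / \<epsilon>)" using pos by simp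
    then have "ennreal (enn2real x) \<le> ennreal (exp (c / \<epsilon>))" by simp
    then show ?thesis using False2 by (simp add: ennreal_enn2real_if)
  qed
qed

lemma h1_all:
  assumes h: "H1 E N P Z I" and T: "T > 0"
  shows "lsc (\<lambda>p. I T (fst p) (snd p)) \<and>
     (\<forall>q U. open U \<longrightarrow>
        Liminf (at_right 0) (\<lambda>\<delta>. Liminf (at_right 0) (\<lambda>\<epsilon>. ereal \<epsilon> *
           elog (INF z\<in>{z\<in>E. norm (\<epsilon> *\<^sub>R z - q) < \<delta>}.
                   emeasure (P z) {\<omega>\<in>space N. \<epsilon> *\<^sub>R Z (T / \<epsilon>) \<omega> \<in> U})))
        \<ge> - enn2ereal (INF q'\<in>U. I T q q')) \<and>
     (\<forall>q V. compact V \<longrightarrow>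
        Limsup (at_right 0) (\<lambda>\<delta>. Limsup (at_right 0) (\<lambda>\<epsilon>. ereal \<epsilon> *
           elog (SUP z\<in>{z\<in>E. norm (\<epsilon> *\<^sub>R z - q) < \<delta>}.
                   emeasure (P z) {\<omega>\<in>space N. \<epsilon> *\<^sub>R Z (T / \<epsilon>) \<omega> \<in> V})))
        \<le> - enn2ereal (INF q'\<in>V. I T q q'))"
  using mp[OF spec[OF h[unfolded H1_def], of T] T] .

lemma h1_lsc: "H1 E N P Z I \<Longrightarrow> T > 0 \<Longrightarrow> lsc (\<lambda>p. I T (fst p) (snd p))"
  by (drule (1) h1_all) (erule conjunct1)

lemma h1_up: "H1 E N P Z I \<Longrightarrow> T > 0 \<Longrightarrow> compact V \<Longrightarrow>
   Limsup (at_right 0) (\<lambda>\<delta>. Limsup (at_right 0) (\<lambda>\<epsilon>. ereal \<epsilon> *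
           elog (SUP z\<in>{z\<in>E. norm (\<epsilon> *\<^sub>R z - q) < \<delta>}.
                   emeasure (P z) {\<omega>\<in>space N. \<epsilon> *\<^sub>R Z (T / \<epsilon>) \<omega> \<in> V})))
        \<le> - enn2ereal (INF q'\<in>V. I T q q')"
  apply (drule (1) h1_all)
  apply (drule conjunct2)
  apply (drule conjunct2)
  apply (erule allE[of _ q])
  apply (erule allE[of _ V])
  apply (erule impE, assumption)
  apply assumption
  done

lemma h1_low: "H1 E N P Z I \<Longrightarrow> T > 0 \<Longrightarrow> open U \<Longrightarrow>
   Liminf (at_right 0) (\<lambda>\<delta>. Liminf (at_right 0) (\<lambda>\<epsilon>. ereal \<epsilon> *
           elog (INF z\<in>{z\<in>E. norm (\<epsilon> *\<^sub>R z - q) < \<delta>}.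
                   emeasure (P z) {\<omega>\<in>space N. \<epsilon> *\<^sub>R Z (T / \<epsilon>) \<omega> \<in> U})))
        \<ge> - enn2ereal (INF q'\<in>U. I T q q')"
  apply (drule (1) h1_all)
  apply (drule conjunct2)
  apply (drule conjunct1)
  apply (erule allE[of _ q])
  apply (erule allE[of _ U])
  apply (erule impE, assumption)
  apply assumption
  done

lemma up_extract:
  assumes h: "H1 E N P Z I" and T: "T > 0" and V: "compact V" and c0: "c \<ge> 0"
    and cV: "\<forall>q''\<in>V. ennreal c \<le> I T q q''" and c': "c' < c"
  shows "\<exists>b>0. \<forall>\<delta>. 0<\<delta> \<and> \<delta><b \<longrightarrow> (\<exists>\<epsilon>0>0. \<forall>\<epsilon>. 0<\<epsilon> \<and> \<epsilon><\<epsilon>0 \<longrightarrow>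
     (\<forall>z\<in>E. norm (\<epsilon> *\<^sub>R z - q) < \<delta> \<longrightarrow>
        emeasure (P z) {\<omega>\<in>space N. \<epsilon> *\<^sub>R Z (T/\<epsilon>) \<omega> \<in> V} \<le> ennreal (exp (-c'/\<epsilon>))))"
proof -
  define F where "F \<delta> \<epsilon> = ereal \<epsilon> * elog (SUP z\<in>{z\<in>E. norm (\<epsilon> *\<^sub>R z - q) < \<delta>}.
                   emeasure (P z) {\<omega>\<in>space N. \<epsilon> *\<^sub>R Z (T / \<epsilon>) \<omega> \<in> V})" for \<delta> \<epsilon>
  have "ennreal c \<le> (INF q'\<in>V. I T q q')" using cV by (intro INF_greatest) auto
  then have "ereal c \<le> enn2ereal (INF q'\<in>V. I T q q')" using c0
    by (metis enn2ereal_ennreal less_eq_ennreal.rep_eq)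
  then have L: "Limsup (at_right 0) (\<lambda>\<delta>. Limsup (at_right 0) (F \<delta>)) \<le> - ereal c"
    using h1_up[OF h T V, of q] unfolding F_def by (meson ereal_uminus_le_reorder order_trans ereal_minus_le_minus)
  have "- ereal c < - ereal c'" using c' by simp
  then have "eventually (\<lambda>\<delta>. - ereal c' > Limsup (at_right 0) (F \<delta>)) (at_right (0::real))"
    using L unfolding Limsup_le_iff by blast
  then obtain b where b: "b > 0" "\<And>\<delta>. \<delta> > 0 \<Longrightarrow> \<delta> < b \<Longrightarrow> - ereal c' > Limsup (at_right 0) (F \<delta>)"
    unfolding eventually_at_right_field by auto
  show ?thesis
  proof (rule exI[of _ b], intro conjI allI impI)
    show "b > 0" by (rule b)
    fix \<delta> assume d: "0 < \<delta> \<and> \<delta> < b"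
    have "Limsup (at_right 0) (F \<delta>) \<le> Limsup (at_right 0) (F \<delta>)" by simp
    then have "eventually (\<lambda>\<epsilon>. - ereal c' > F \<delta> \<epsilon>) (at_right (0::real))"
      using b(2)[of \<delta>] d unfolding Limsup_le_iff by blast
    then obtain e where e: "e > 0" "\<And>\<epsilon>. \<epsilon> > 0 \<Longrightarrow> \<epsilon> < e \<Longrightarrow> - ereal c' > F \<delta> \<epsilon>"
      unfolding eventually_at_right_field by auto
    show "\<exists>\<epsilon>0>0. \<forall>\<epsilon>. 0<\<epsilon> \<and> \<epsilon><\<epsilon>0 \<longrightarrow> (\<forall>z\<in>E. norm (\<epsilon> *\<^sub>R z - q) < \<delta> \<longrightarrow>
        emeasure (P z) {\<omega>\<in>space N. \<epsilon> *\<^sub>R Z (T/\<epsilon>) \<omega> \<in> V} \<le> ennreal (exp (-c'/\<epsilon>)))"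
    proof (intro exI[of _ e] conjI allI impI ballI)
      show "e > 0" by (rule e)
      fix \<epsilon> z assume ee: "0 < \<epsilon> \<and> \<epsilon> < e" and z: "z \<in> E" and nz: "norm (\<epsilon> *\<^sub>R z - q) < \<delta>"
      let ?x = "emeasure (P z) {\<omega>\<in>space N. \<epsilon> *\<^sub>R Z (T/\<epsilon>) \<omega> \<in> V}"
      have "?x \<le> (SUP z\<in>{z\<in>E. norm (\<epsilon> *\<^sub>R z - q) < \<delta>}. emeasure (P z) {\<omega>\<in>space N. \<epsilon> *\<^sub>R Z (T / \<epsilon>) \<omega> \<in> V})"
        using z nz by (intro SUP_upper) auto
      then have "ereal \<epsilon> * elog ?x \<le> F \<delta> \<epsilon>" unfolding F_def using ee
        by (intro ereal_mult_left_mono elog_mono) auto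
      also have "\<dots> < ereal (-c')" using e(2)[of \<epsilon>] ee by simp
      finally show "?x \<le> ennreal (exp (-c'/\<epsilon>))" using elog_bound[of \<epsilon> ?x "-c'"] ee by simp
    qed
  qed
qed

lemma low_extract:
  assumes h: "H1 E N P Z I" and T: "T > 0" and U: "open U" and j0: "j \<ge> 0"
    and jU: "(INF q''\<in>U. I T q q'') < ennreal j"
  shows "\<exists>b>0. \<forall>\<delta>. 0<\<delta> \<and> \<delta><b \<longrightarrow> (\<exists>\<epsilon>0>0. \<forall>\<epsilon>. 0<\<epsilon> \<and> \<epsilon><\<epsilon>0 \<longrightarrow>
     - ereal j < ereal \<epsilon> * elog (INF z\<in>{z\<in>E. norm (\<epsilon> *\<^sub>R z - q) < \<delta>}.
                   emeasure (P z) {\<omega>\<in>space N. \<epsilon> *\<^sub>R Z (T / \<epsilon>) \<omega> \<in> U}))"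
proof -
  define G where "G \<delta> \<epsilon> = ereal \<epsilon> * elog (INF z\<in>{z\<in>E. norm (\<epsilon> *\<^sub>R z - q) < \<delta>}.
                   emeasure (P z) {\<omega>\<in>space N. \<epsilon> *\<^sub>R Z (T / \<epsilon>) \<omega> \<in> U})" for \<delta> \<epsilon>
  have "enn2ereal (INF q'\<in>U. I T q q') < ereal j" using jU j0
    by (metis enn2ereal_ennreal less_ennreal.rep_eq)
  then have lt: "- ereal j < - enn2ereal (INF q'\<in>U. I T q q')" by (metis ereal_minus_less_minus)
  have L: "- enn2ereal (INF q'\<in>U. I T q q') \<le> Liminf (at_right 0) (\<lambda>\<delta>. Liminf (at_right 0) (G \<delta>))"
    using h1_low[OF h T U, of q] unfolding G_def .
  have "eventually (\<lambda>\<delta>. - ereal j < Liminf (at_right 0) (G \<delta>)) (at_right (0::real))"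
    using L lt unfolding le_Liminf_iff by blast
  then obtain b where b: "b > 0" "\<And>\<delta>. \<delta> > 0 \<Longrightarrow> \<delta> < b \<Longrightarrow> - ereal j < Liminf (at_right 0) (G \<delta>)"
    unfolding eventually_at_right_field by auto
  show ?thesis
  proof (rule exI[of _ b], intro conjI allI impI)
    show "b > 0" by (rule b)
    fix \<delta> assume d: "0 < \<delta> \<and> \<delta> < b"
    have "Liminf (at_right 0) (G \<delta>) \<le> Liminf (at_right 0) (G \<delta>)" by simp
    then have "eventually (\<lambda>\<epsilon>. - ereal j < G \<delta> \<epsilon>) (at_right (0::real))"
      using b(2)[of \<delta>] d unfolding le_Liminf_iff by blast
    then obtain e where e: "e > 0" "\<And>\<epsilon>. \<epsilon> > 0 \<Longrightarrow> \<epsilon> < e \<Longrightarrow> - ereal j < G \<delta> \<epsilon>"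
      unfolding eventually_at_right_field by auto
    then show "\<exists>\<epsilon>0>0. \<forall>\<epsilon>. 0<\<epsilon> \<and> \<epsilon><\<epsilon>0 \<longrightarrow> - ereal j < ereal \<epsilon> * elog (INF z\<in>{z\<in>E. norm (\<epsilon> *\<^sub>R z - q) < \<delta>}.
                   emeasure (P z) {\<omega>\<in>space N. \<epsilon> *\<^sub>R Z (T / \<epsilon>) \<omega> \<in> U})"
      unfolding G_def by blast
  qed
qed

lemma pos_ennreal_below:
  fixes x :: ennreal assumes "0 < x"
  obtains c where "c > 0" "ennreal c < x"
proof -
  obtain y where y: "0 < y" "y < x" using dense[OF assms] by blast
  then have yt: "y < top" using top.not_eq_extremum by fastforce
  have "ennreal (enn2real y) = y" using yt by simp
  moreover have "enn2real y > 0" using y yt by (simp add: enn2real_positive_iff)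
  ultimately show ?thesis using that y by metis
qed

lemma lsc_ball:
  fixes I :: "'a::metric_space \<Rightarrow> 'a \<Rightarrow> ennreal"
  assumes l: "lsc (\<lambda>p. I (fst p) (snd p))" and c: "c < I q q'"
  obtains d where "d > 0" "\<And>p'. dist p' q' < d \<Longrightarrow> c < I q p'"
proof -
  have "eventually (\<lambda>p. c < I (fst p) (snd p)) (nhds (q, q'))"
    using l c unfolding lsc_def by auto
  then obtain d where d: "d > 0" "\<And>x. dist x (q, q') < d \<Longrightarrow> c < I (fst x) (snd x)"
    unfolding eventually_nhds_metric by blast
  show ?thesis
  proof (rule that[OF d(1)])
    fix p' assume "dist p' q' < d"
    then have "dist (q, p') (q, q') < d" by (simp add: dist_Pair_Pair)
    then show "c < I q p'" using d(2) by fastforce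
  qed
qed

lemma pos_lemma:
  fixes E :: "'a::euclidean_space set"
  assumes h: "H1 E N P Z I" and pos: "\<exists>T>0. I T 0 0 > 0"
  shows "\<exists>\<kappa>>0. \<exists>\<rho>>0. \<exists>\<beta>>0. \<exists>t0>0. \<forall>t>t0. \<forall>z\<in>E. norm z < \<kappa>*t \<longrightarrow>
           emeasure (P z) {\<omega>\<in>space N. norm (Z t \<omega>) \<le> \<rho>*t} \<le> ennreal (exp (-(\<beta>*t)))"
proof -
  obtain T0 where T0: "T0 > 0" "0 < I T0 0 0" using pos by blast
  obtain c where c: "c > 0" "ennreal c < I T0 0 0" using pos_ennreal_below[OF T0(2)] by blast
  obtain d where d: "d > 0" "\<And>p'. dist p' 0 < d \<Longrightarrow> ennreal c < I T0 0 p'"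
    using lsc_ball[OF h1_lsc[OF h T0(1)] c(2)] by blast
  define V where "V = cball (0::'a) (d/2)"
  have cV: "\<forall>q''\<in>V. ennreal c \<le> I T0 0 q''"
    using d unfolding V_def by (auto intro!: less_imp_le simp: dist_norm)
  obtain b where b: "b > 0" "\<And>\<delta>. 0<\<delta> \<and> \<delta><b \<Longrightarrow> (\<exists>\<epsilon>0>0. \<forall>\<epsilon>. 0<\<epsilon> \<and> \<epsilon><\<epsilon>0 \<longrightarrow>
     (\<forall>z\<in>E. norm (\<epsilon> *\<^sub>R z - 0) < \<delta> \<longrightarrow>
        emeasure (P z) {\<omega>\<in>space N. \<epsilon> *\<^sub>R Z (T0/\<epsilon>) \<omega> \<in> V} \<le> ennreal (exp (-(c/2)/\<epsilon>))))"
    using up_extract[OF h T0(1) _ _ cV, where c'="c/2"] c(1) compact_cball unfolding V_def by auto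
  define \<delta>0 where "\<delta>0 = b/2"
  obtain e where e: "e > 0" "\<And>\<epsilon> z. 0<\<epsilon> \<Longrightarrow> \<epsilon><e \<Longrightarrow> z \<in> E \<Longrightarrow> norm (\<epsilon> *\<^sub>R z - 0) < \<delta>0 \<Longrightarrow>
        emeasure (P z) {\<omega>\<in>space N. \<epsilon> *\<^sub>R Z (T0/\<epsilon>) \<omega> \<in> V} \<le> ennreal (exp (-(c/2)/\<epsilon>))"
    using b(2)[of \<delta>0] b(1) unfolding \<delta>0_def by auto
  have p1: "\<delta>0/T0 > 0" and p2: "d/(2*T0) > 0" and p3: "c/(2*T0) > 0" and p4: "T0/e > 0"
    using b(1) d(1) c(1) T0(1) e(1) by (auto simp: \<delta>0_def)
  have main: "\<forall>t>T0/e. \<forall>z\<in>E. norm z < \<delta>0 / T0 * t \<longrightarrow>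
      emeasure (P z) {\<omega>\<in>space N. norm (Z t \<omega>) \<le> d / (2 * T0) * t} \<le> ennreal (exp (-(c / (2 * T0) * t)))"
  proof (intro allI impI ballI)
    fix t z assume t: "T0/e < t" and z: "z \<in> E" and nz: "norm z < \<delta>0 / T0 * t"
    have tpos: "t > 0" using t T0(1) e(1) by (smt (verit) divide_pos_pos)
    define \<epsilon> where "\<epsilon> = T0 / t"
    have ep: "\<epsilon> > 0" "\<epsilon> < e" using tpos T0(1) e(1) t by (auto simp: \<epsilon>_def field_simps)
    have tt: "T0 / \<epsilon> = t" using tpos T0(1) by (simp add: \<epsilon>_def)
    have "norm (\<epsilon> *\<^sub>R z - 0) = \<epsilon> * norm z" using ep by simp
    also have "\<dots> < \<epsilon> * (\<delta>0 / T0 * t)" using mult_strict_left_mono[OF nz ep(1)] by simp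
    also have "\<dots> = \<delta>0" using tpos T0(1) by (simp add: \<epsilon>_def)
    finally have "norm (\<epsilon> *\<^sub>R z - 0) < \<delta>0" .
    from e(2)[OF ep z this] tt
    have bd: "emeasure (P z) {\<omega>\<in>space N. \<epsilon> *\<^sub>R Z t \<omega> \<in> V} \<le> ennreal (exp (-(c/2)/\<epsilon>))" by simp
    have "{\<omega>\<in>space N. norm (Z t \<omega>) \<le> d / (2 * T0) * t} = {\<omega>\<in>space N. \<epsilon> *\<^sub>R Z t \<omega> \<in> V}"
    proof -
      have "norm (Z t \<omega>) \<le> d / (2 * T0) * t \<longleftrightarrow> \<epsilon> * norm (Z t \<omega>) \<le> d/2" for \<omega>
        using tpos T0(1) by (simp add: \<epsilon>_def field_simps)
      then show ?thesis unfolding V_def using ep by (auto simp: dist_norm)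
    qed
    moreover have "-(c/2)/\<epsilon> = -(c / (2 * T0) * t)" using tpos T0(1) by (simp add: \<epsilon>_def field_simps)
    ultimately show "emeasure (P z) {\<omega>\<in>space N. norm (Z t \<omega>) \<le> d / (2 * T0) * t} \<le> ennreal (exp (-(c / (2 * T0) * t)))"
      using bd by simp
  qed
  show ?thesis
    apply (rule exI[of _ "\<delta>0/T0"], rule conjI, rule p1)
    apply (rule exI[of _ "d/(2*T0)"], rule conjI, rule p2)
    apply (rule exI[of _ "c/(2*T0)"], rule conjI, rule p3)
    apply (rule exI[of _ "T0/e"], rule conjI, rule p4)
    apply (rule main)
    done
qed

lemma ln_lin_small:
  fixes A B c :: real assumes "A > 0" "B > 0" "c > 0"
  shows "eventually (\<lambda>n. ln (A + B * n) / n \<le> c) at_top"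
proof -
  have "((\<lambda>n::real. ln (A + B * n) / n) \<longlongrightarrow> 0) at_top" using assms by real_asymp
  from order_tendstoD(2)[OF this assms(3)] show ?thesis by (rule eventually_mono) simp
qed

lemma green_bound:
  assumes b: "\<And>t. t \<ge> 0 \<Longrightarrow> emeasure (P z) {\<omega>\<in>space N. Z t \<omega> \<in> A} \<le> ennreal (if t \<le> L then a else bb * exp (-(g*t)))"
    and L: "L \<ge> 0" and a: "a \<ge> 0" and bb: "bb \<ge> 0" and g: "g > 0"
  shows "green N P Z z A \<le> ennreal (a*L + bb/g)"
proof -
  have "green N P Z z A \<le> (\<integral>\<^sup>+t. ennreal a * indicator {0..L} t + ennreal bb * ennreal (indicator {0..} t * exp (-(g*t))) \<partial>lborel)"
    unfolding green_def
  proof (rule nn_integral_mono)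
    fix t :: real
    show "indicator {0..} t * emeasure (P z) {\<omega>\<in>space N. Z t \<omega> \<in> A}
        \<le> ennreal a * indicator {0..L} t + ennreal bb * ennreal (indicator {0..} t * exp (-(g*t)))"
    proof (cases "t \<ge> 0")
      case False then show ?thesis by simp
    next
      case True
      show ?thesis
      proof (cases "t \<le> L")
        case tL: True
        have "indicator {0..} t * emeasure (P z) {\<omega>\<in>space N. Z t \<omega> \<in> A} \<le> ennreal a"
          using b[OF True] tL True by simp
        also have "\<dots> = ennreal a * indicator {0..L} t" using True tL by simp
        also have "\<dots> \<le> ennreal a * indicator {0..L} t + ennreal bb * ennreal (indicator {0..} t * exp (-(g*t)))"
          by simp
        finally show ?thesis .
      next
        case tL: False
        have "indicator {0..} t * emeasure (P z) {\<omega>\<in>space N. Z t \<omega> \<in> A} \<le> ennreal (bb * exp (-(g*t)))"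
          using b[OF True] tL True by simp
        also have "\<dots> = ennreal bb * ennreal (indicator {0..} t * exp (-(g*t)))" using True bb
          by (simp add: ennreal_mult)
        also have "\<dots> \<le> ennreal a * indicator {0..L} t + ennreal bb * ennreal (indicator {0..} t * exp (-(g*t)))"
          by simp
        finally show ?thesis .
      qed
    qed
  qed
  also have "\<dots> = (\<integral>\<^sup>+t. ennreal a * indicator {0..L} t \<partial>lborel) + (\<integral>\<^sup>+t. ennreal bb * ennreal (indicator {0..} t * exp (-(g*t))) \<partial>lborel)"
    by (rule nn_integral_add) auto
  also have "\<dots> = ennreal a * ennreal L + ennreal bb * ennreal (1/g)"
    using L by (simp add: nn_integral_cmult exp_int[OF g])
  also have "\<dots> = ennreal (a*L + bb/g)" using a bb L g by (simp add: ennreal_mult[symmetric] ennreal_plus[symmetric] del: ennreal_plus)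
  finally show ?thesis .
qed

lemma limsup_goal:
  assumes "\<exists>\<delta>1>0. \<forall>\<delta>. 0<\<delta> \<and> \<delta><\<delta>1 \<longrightarrow> (\<exists>n1. \<forall>n\<ge>n1. \<forall>z\<in>{z\<in>E. norm (z - n *\<^sub>R q) < \<delta>*n}. H \<delta> n z \<le> ereal c)"
  shows "Limsup (at_right 0) (\<lambda>\<delta>::real. Limsup at_top (\<lambda>n::real. SUP z\<in>{z\<in>E. norm (z - n *\<^sub>R q) < \<delta> * n}. H \<delta> n z)) \<le> ereal c"
proof (rule Limsup_bounded)
  obtain \<delta>1 where d1: "\<delta>1 > 0" "\<And>\<delta>. 0<\<delta> \<and> \<delta><\<delta>1 \<Longrightarrow> (\<exists>n1. \<forall>n\<ge>n1. \<forall>z\<in>{z\<in>E. norm (z - n *\<^sub>R q) < \<delta>*n}. H \<delta> n z \<le> ereal c)"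
    using assms by blast
  show "eventually (\<lambda>\<delta>. Limsup at_top (\<lambda>n::real. SUP z\<in>{z\<in>E. norm (z - n *\<^sub>R q) < \<delta> * n}. H \<delta> n z) \<le> ereal c) (at_right 0)"
    unfolding eventually_at_right_field
  proof (rule exI[of _ \<delta>1], intro conjI allI impI)
    show "\<delta>1 > 0" by (rule d1)
    fix \<delta> :: real assume "0 < \<delta>" "\<delta> < \<delta>1"
    then obtain n1 where n1: "\<forall>n\<ge>n1. \<forall>z\<in>{z\<in>E. norm (z - n *\<^sub>R q) < \<delta>*n}. H \<delta> n z \<le> ereal c"
      using d1(2) by blast
    show "Limsup at_top (\<lambda>n::real. SUP z\<in>{z\<in>E. norm (z - n *\<^sub>R q) < \<delta> * n}. H \<delta> n z) \<le> ereal c"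
      by (rule Limsup_bounded) (use n1 in \<open>auto simp: eventually_at_top_linorder intro!: SUP_least exI[of _ n1]\<close>)
  qed
qed

lemma elog_final:
  assumes n: "n > 0" and G: "G \<le> ennreal Bv" and B: "Bv > 0" and c: "ln Bv / n \<le> c"
  shows "ereal (1/n) * elog G \<le> ereal c"
proof -
  have "ereal (1/n) * elog G \<le> ereal (1/n) * ereal (ln Bv)"
    using n by (intro ereal_mult_left_mono elog_le_ln[OF G B]) auto
  also have "\<dots> = ereal (ln Bv / n)" by simp
  also have "\<dots> \<le> ereal c" using c by simp
  finally show ?thesis .
qed

lemma scaled_ball_norm:
  assumes "x \<in> (\<lambda>x. n *\<^sub>R x) ` ball q' \<delta>" "n \<ge> 0" "\<delta> \<le> 1"
  shows "norm x \<le> n * (norm q' + 1)"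
proof -
  from assms(1) obtain y where y0: "y \<in> ball q' \<delta>" "x = n *\<^sub>R y" by blast
  then have y: "x = n *\<^sub>R y" "dist q' y < \<delta>" by auto
  have "norm y \<le> norm q' + 1" using y(2) assms(3) norm_triangle_ineq2[of y q'] by (simp add: dist_norm norm_minus_commute)
  then show ?thesis using y(1) assms(2) by (simp add: mult_left_mono)
qed

lemma start_norm:
  assumes "norm (z - n *\<^sub>R q) < \<delta> * n" "n \<ge> 0" "\<delta> \<le> 1"
  shows "norm z < n * (norm q + 1)"
proof -
  have "norm z \<le> norm (z - n *\<^sub>R q) + norm (n *\<^sub>R q)" using norm_triangle_ineq[of "z - n *\<^sub>R q" "n *\<^sub>R q"] by simp
  also have "\<dots> < \<delta> * n + n * norm q" using assms by simp
  also have "\<dots> \<le> n * (norm q + 1)" using assms mult_right_mono[of \<delta> 1 n] by (simp add: algebra_simps)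
  finally show ?thesis .
qed

lemma L0:
  fixes E :: "'a::euclidean_space set"
  assumes m: "strong_markov_cadlag E N P Z" and h: "H1 E N P Z I" and pos: "\<exists>T>0. I T 0 0 > 0"
    and \<alpha>: "\<alpha> < 0"
  shows "Limsup (at_right 0) (\<lambda>\<delta>::real. Limsup at_top (\<lambda>n::real.
           SUP z\<in>{z\<in>E. norm (z - n *\<^sub>R q) < \<delta> * n}.
             ereal (1 / n) * elog (green N P Z z ((\<lambda>x. n *\<^sub>R x) ` ball q' \<delta>)))) \<le> ereal (-\<alpha>)"
proof (rule limsup_goal)
  obtain \<kappa> \<rho> \<beta> t0 where kp: "\<kappa> > 0" "\<rho> > 0" "\<beta> > 0" "t0 > 0"
    and pb: "\<And>t z. t > t0 \<Longrightarrow> z \<in> E \<Longrightarrow> norm z < \<kappa>*t \<Longrightarrow>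
           emeasure (P z) {\<omega>\<in>space N. norm (Z t \<omega>) \<le> \<rho>*t} \<le> ennreal (exp (-(\<beta>*t)))"
    using pos_lemma[OF h pos] by blast
  define C where "C = (norm q + 1)/\<kappa> + (norm q' + 1)/\<rho>"
  have "norm q + 1 > 0" "norm q' + 1 > 0" by (auto intro: add_nonneg_pos)
  then have C: "C > 0" using kp unfolding C_def by (meson add_pos_pos divide_pos_pos)
  obtain N0 where N0: "\<And>n. n \<ge> N0 \<Longrightarrow> ln ((t0 + 1/\<beta>) + C * n) / n \<le> -\<alpha>"
  proof -
    have "t0 + 1/\<beta> > 0" using kp by (simp add: add_pos_pos)
    then show ?thesis using ln_lin_small[of "t0 + 1/\<beta>" C "-\<alpha>"] that C \<alpha> by (auto simp: eventually_at_top_linorder)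
  qed
  show "\<exists>\<delta>1>0. \<forall>\<delta>. 0 < \<delta> \<and> \<delta> < \<delta>1 \<longrightarrow> (\<exists>n1. \<forall>n\<ge>n1. \<forall>z\<in>{z \<in> E. norm (z - n *\<^sub>R q) < \<delta> * n}.
      ereal (1 / n) * elog (green N P Z z ((*\<^sub>R) n ` ball q' \<delta>)) \<le> ereal (- \<alpha>))"
  proof (rule exI[of _ 1], intro conjI allI impI)
    fix \<delta> :: real assume d: "0 < \<delta> \<and> \<delta> < 1"
    show "\<exists>n1. \<forall>n\<ge>n1. \<forall>z\<in>{z \<in> E. norm (z - n *\<^sub>R q) < \<delta> * n}.
      ereal (1 / n) * elog (green N P Z z ((*\<^sub>R) n ` ball q' \<delta>)) \<le> ereal (- \<alpha>)"
    proof (rule exI[of _ "max N0 1"], intro allI impI ballI)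
      fix n :: real and z assume n: "n \<ge> max N0 1" and z: "z \<in> {z \<in> E. norm (z - n *\<^sub>R q) < \<delta> * n}"
      have zE: "z \<in> E" and nz: "norm z < n * (norm q + 1)" using z start_norm[of z n q \<delta>] d n by auto
      define L where "L = t0 + C * n"
      have L0: "L \<ge> 0" using kp C n by (simp add: L_def)
      have bnd: "emeasure (P z) {\<omega>\<in>space N. Z t \<omega> \<in> (\<lambda>x. n *\<^sub>R x) ` ball q' \<delta>} \<le> ennreal (if t \<le> L then 1 else 1 * exp (-(\<beta>*t)))"
        if t: "t \<ge> 0" for t
      proof (cases "t \<le> L")
        case True
        then show ?thesis using prob_space.emeasure_le_1[OF sm_basic(1)[OF m zE]] by simp
      next
        case False
        have tt0: "t > t0" using False kp C n unfolding L_def by (smt (verit) mult_nonneg_nonneg)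
        have "n * (norm q + 1) \<le> \<kappa> * L"
        proof -
          have "n * (norm q + 1) = \<kappa> * ((norm q + 1)/\<kappa> * n)" using kp by simp
          also have "\<dots> \<le> \<kappa> * L" using kp n C unfolding L_def C_def
            by (intro mult_left_mono) (auto simp: algebra_simps intro!: add_nonneg_nonneg mult_nonneg_nonneg)
          finally show ?thesis .
        qed
        then have zk: "norm z < \<kappa> * t" using nz False kp by (smt (verit) mult_strict_left_mono)
        have "n * (norm q' + 1) \<le> \<rho> * L"
        proof -
          have "n * (norm q' + 1) = \<rho> * ((norm q' + 1)/\<rho> * n)" using kp by simp
          also have "\<dots> \<le> \<rho> * L" using kp n C unfolding L_def C_def
            by (intro mult_left_mono) (auto simp: algebra_simps intro!: add_nonneg_nonneg mult_nonneg_nonneg)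
          finally show ?thesis .
        qed
        then have rl: "n * (norm q' + 1) \<le> \<rho> * t" using False kp by (smt (verit) mult_strict_left_mono)
        have sub: "{\<omega>\<in>space N. Z t \<omega> \<in> (\<lambda>x. n *\<^sub>R x) ` ball q' \<delta>} \<subseteq> {\<omega>\<in>space N. norm (Z t \<omega>) \<le> \<rho>*t}"
        proof (intro subsetI CollectI conjI)
          fix \<omega> assume "\<omega> \<in> {\<omega>\<in>space N. Z t \<omega> \<in> (\<lambda>x. n *\<^sub>R x) ` ball q' \<delta>}"
          then have w: "\<omega> \<in> space N" "Z t \<omega> \<in> (\<lambda>x. n *\<^sub>R x) ` ball q' \<delta>" by auto
          have "n \<ge> 0" "\<delta> \<le> 1" using n d by auto
          from scaled_ball_norm[OF w(2) this] rl show "norm (Z t \<omega>) \<le> \<rho>*t" by simp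
          show "\<omega> \<in> space N" by (rule w(1))
        qed
        have meas: "{\<omega>\<in>space N. norm (Z t \<omega>) \<le> \<rho>*t} \<in> sets (P z)"
        proof -
          have "{\<omega>\<in>space (P z). norm (Z t \<omega>) \<le> \<rho>*t} \<in> sets (P z)"
            using sm_meas_P[OF m t zE] by measurable
          then show ?thesis using sm_basic(3)[OF m zE] by simp
        qed
        have "emeasure (P z) {\<omega>\<in>space N. Z t \<omega> \<in> (\<lambda>x. n *\<^sub>R x) ` ball q' \<delta>} \<le> emeasure (P z) {\<omega>\<in>space N. norm (Z t \<omega>) \<le> \<rho>*t}"
          by (rule emeasure_mono[OF sub meas])
        also have "\<dots> \<le> ennreal (exp (-(\<beta>*t)))" by (rule pb[OF tt0 zE zk])
        finally show ?thesis using False by simp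
      qed
      have G: "green N P Z z ((\<lambda>x. n *\<^sub>R x) ` ball q' \<delta>) \<le> ennreal (1 * L + 1/\<beta>)"
        by (rule green_bound[where a=1 and bb=1 and g=\<beta> and P=P and z=z and N=N and Z=Z and L=L and A="(\<lambda>x. n *\<^sub>R x) ` ball q' \<delta>", OF bnd L0]) (use kp in auto)
      have "ln (1 * L + 1/\<beta>) / n \<le> -\<alpha>" using N0[of n] n unfolding L_def by (simp add: algebra_simps)
      then show "ereal (1 / n) * elog (green N P Z z ((*\<^sub>R) n ` ball q' \<delta>)) \<le> ereal (- \<alpha>)"
        using elog_final[OF _ G] n kp L0 by (smt (verit) divide_pos_pos)
    qed
  qed simp
qed

lemma elog_exp: "elog (ennreal (exp x)) = ereal x"
  by (simp add: elog_def)

lemma scaling: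
  fixes E :: "'a::euclidean_space set"
  assumes m: "strong_markov_cadlag E N P Z" and h: "H1 E N P Z I"
    and q: "q \<in> scaling_limits E" and lam: "l > 0"
  shows "ennreal l * I (1/l) q q' \<le> I 1 (l *\<^sub>R q) (l *\<^sub>R q')"
proof (rule ccontr)
  define T where "T = 1/l"
  have T: "T > 0" using lam by (simp add: T_def)
  let ?J = "I 1 (l *\<^sub>R q) (l *\<^sub>R q')"
  assume "\<not> ennreal l * I (1/l) q q' \<le> ?J"
  then have lt: "?J < ennreal l * I T q q'" unfolding T_def by simp
  obtain x where x: "?J < x" "x < ennreal l * I T q q'" using dense[OF lt] by blast
  have xt: "x < top" using x(2) top.not_eq_extremum by fastforce
  define j where "j = enn2real x"
  have j0: "j \<ge> 0" and xj: "x = ennreal j" using xt by (auto simp: j_def)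
  have Jj: "?J < ennreal j" using x(1) xj by simp
  have "ennreal (j/l) < I T q q'"
  proof (rule ccontr)
    assume "\<not> ennreal (j/l) < I T q q'"
    then have "I T q q' \<le> ennreal (j/l)" by simp
    then have "ennreal l * I T q q' \<le> ennreal l * ennreal (j/l)" by (rule mult_left_mono) simp
    also have "\<dots> = ennreal j" using lam j0 by (simp add: ennreal_mult[symmetric])
    finally show False using x(2) xj by simp
  qed
  then obtain y where y: "ennreal (j/l) < y" "y < I T q q'" using dense by blast
  have yt: "y < top" using y(2) top.not_eq_extremum by fastforce
  define c where "c = enn2real y"
  have c0: "c \<ge> 0" and yc: "y = ennreal c" using yt by (auto simp: c_def)
  have jl0: "j/l \<ge> 0" using j0 lam by simp
  have jc: "j/l < c" using y(1) yc ennreal_less_iff[OF jl0] by simp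
  obtain d where d: "d > 0" "\<And>p'. dist p' q' < d \<Longrightarrow> ennreal c < I T q p'"
    using lsc_ball[OF h1_lsc[OF h T], of "ennreal c" q q'] y(2) yc by blast
  define V where "V = cball q' (d/2)"
  have cV: "\<forall>q''\<in>V. ennreal c \<le> I T q q''"
    using d unfolding V_def by (auto intro!: less_imp_le simp: dist_commute)
  define c' where "c' = (j/l + c)/2"
  have c'c: "c' < c" and jc': "j < l * c'" using jc lam by (auto simp: c'_def field_simps)
  obtain b1 where b1: "b1 > 0" "\<And>\<delta>. 0<\<delta> \<and> \<delta><b1 \<Longrightarrow> (\<exists>\<epsilon>0>0. \<forall>\<epsilon>. 0<\<epsilon> \<and> \<epsilon><\<epsilon>0 \<longrightarrow>
     (\<forall>z\<in>E. norm (\<epsilon> *\<^sub>R z - q) < \<delta> \<longrightarrow>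
        emeasure (P z) {\<omega>\<in>space N. \<epsilon> *\<^sub>R Z (T/\<epsilon>) \<omega> \<in> V} \<le> ennreal (exp (-c'/\<epsilon>))))"
    using up_extract[OF h T _ c0 cV c'c] unfolding V_def by auto
  define U where "U = ball (l *\<^sub>R q') (l * d/2)"
  have "l *\<^sub>R q' \<in> U" using lam d by (simp add: U_def)
  then have "(INF q''\<in>U. I 1 (l *\<^sub>R q) q'') \<le> ?J" by (rule INF_lower)
  then have UJ: "(INF q''\<in>U. I 1 (l *\<^sub>R q) q'') < ennreal j" using Jj by simp
  obtain b2 where b2: "b2 > 0" "\<And>\<delta>. 0<\<delta> \<and> \<delta><b2 \<Longrightarrow> (\<exists>\<epsilon>0>0. \<forall>\<epsilon>. 0<\<epsilon> \<and> \<epsilon><\<epsilon>0 \<longrightarrow>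
     - ereal j < ereal \<epsilon> * elog (INF z\<in>{z\<in>E. norm (\<epsilon> *\<^sub>R z - l *\<^sub>R q) < \<delta>}.
                   emeasure (P z) {\<omega>\<in>space N. \<epsilon> *\<^sub>R Z (1 / \<epsilon>) \<omega> \<in> U}))"
    using low_extract[OF h _ _ j0 UJ] unfolding U_def by auto
  define \<delta> where "\<delta> = min b1 (b2/l) / 2"
  have dpos: "\<delta> > 0" "\<delta> < b1" "l * \<delta> < b2" "l * \<delta> > 0"
    using b1(1) b2(1) lam by (auto simp: \<delta>_def min_def field_simps)
  obtain e1 where e1: "e1 > 0" "\<And>\<epsilon> z. 0<\<epsilon> \<Longrightarrow> \<epsilon><e1 \<Longrightarrow> z\<in>E \<Longrightarrow> norm (\<epsilon> *\<^sub>R z - q) < \<delta> \<Longrightarrow>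
        emeasure (P z) {\<omega>\<in>space N. \<epsilon> *\<^sub>R Z (T/\<epsilon>) \<omega> \<in> V} \<le> ennreal (exp (-c'/\<epsilon>))"
    using b1(2)[of \<delta>] dpos by blast
  obtain e2 where e2: "e2 > 0" "\<And>\<epsilon>. 0<\<epsilon> \<Longrightarrow> \<epsilon><e2 \<Longrightarrow>
     - ereal j < ereal \<epsilon> * elog (INF z\<in>{z\<in>E. norm (\<epsilon> *\<^sub>R z - l *\<^sub>R q) < l * \<delta>}.
                   emeasure (P z) {\<omega>\<in>space N. \<epsilon> *\<^sub>R Z (1 / \<epsilon>) \<omega> \<in> U})"
    using b2(2)[of "l * \<delta>"] dpos by blast
  obtain zz where zz: "\<forall>\<epsilon>>0. zz \<epsilon> \<in> E" "((\<lambda>\<epsilon>. \<epsilon> *\<^sub>R zz \<epsilon>) \<longlongrightarrow> q) (at_right 0)"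
    using q unfolding scaling_limits_def by blast
  have "eventually (\<lambda>\<epsilon>. dist (\<epsilon> *\<^sub>R zz \<epsilon>) q < \<delta>) (at_right (0::real))"
    using zz(2) dpos(1) unfolding tendsto_iff by blast
  then obtain e3 where e3: "e3 > 0" "\<And>\<epsilon>. 0<\<epsilon> \<Longrightarrow> \<epsilon><e3 \<Longrightarrow> dist (\<epsilon> *\<^sub>R zz \<epsilon>) q < \<delta>"
    unfolding eventually_at_right_field by blast
  define \<epsilon> where "\<epsilon> = min e1 (min (e2/l) e3) / 2"
  define mm where "mm = min e1 (min (e2/l) e3)"
  have mm: "mm > 0" "mm \<le> e1" "mm \<le> e2/l" "mm \<le> e3" using e1(1) e2(1) e3(1) lam by (auto simp: mm_def)
  have eps: "\<epsilon> = mm/2" by (simp add: \<epsilon>_def mm_def)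
  have e2l: "\<epsilon> < e2/l" using mm eps by simp
  have epos: "\<epsilon> > 0" "\<epsilon> < e1" "\<epsilon> < e3" "l * \<epsilon> < e2" "l * \<epsilon> > 0"
    using mm eps lam e2l by (auto simp: field_simps)
  define z0 where "z0 = zz \<epsilon>"
  have z0: "z0 \<in> E" "norm (\<epsilon> *\<^sub>R z0 - q) < \<delta>"
    using zz(1) epos e3(2)[of \<epsilon>] by (auto simp: z0_def dist_norm)
  have up: "emeasure (P z0) {\<omega>\<in>space N. \<epsilon> *\<^sub>R Z (T/\<epsilon>) \<omega> \<in> V} \<le> ennreal (exp (-c'/\<epsilon>))"
    using e1(2)[OF epos(1) epos(2) z0] .
  have z0set: "z0 \<in> {z\<in>E. norm ((l * \<epsilon>) *\<^sub>R z - l *\<^sub>R q) < l * \<delta>}"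
  proof -
    have "(l * \<epsilon>) *\<^sub>R z0 - l *\<^sub>R q = l *\<^sub>R (\<epsilon> *\<^sub>R z0 - q)" by (simp add: algebra_simps)
    then have "norm ((l * \<epsilon>) *\<^sub>R z0 - l *\<^sub>R q) = l * norm (\<epsilon> *\<^sub>R z0 - q)" using lam by simp
    then show ?thesis using z0 lam by simp
  qed
  have tt: "1 / (l * \<epsilon>) = T / \<epsilon>" by (simp add: T_def)
  have subUV: "{\<omega>\<in>space N. (l * \<epsilon>) *\<^sub>R Z (1 / (l * \<epsilon>)) \<omega> \<in> U} \<subseteq> {\<omega>\<in>space N. \<epsilon> *\<^sub>R Z (T/\<epsilon>) \<omega> \<in> V}"
  proof (intro subsetI CollectI conjI)
    fix \<omega> assume "\<omega> \<in> {\<omega>\<in>space N. (l * \<epsilon>) *\<^sub>R Z (1 / (l * \<epsilon>)) \<omega> \<in> U}"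
    then have w: "\<omega> \<in> space N" "(l * \<epsilon>) *\<^sub>R Z (T/\<epsilon>) \<omega> \<in> U" using tt by auto
    show "\<omega> \<in> space N" by (rule w(1))
    have "l *\<^sub>R q' - (l * \<epsilon>) *\<^sub>R Z (T/\<epsilon>) \<omega> = l *\<^sub>R (q' - \<epsilon> *\<^sub>R Z (T/\<epsilon>) \<omega>)" by (simp add: algebra_simps)
    then have "norm (l *\<^sub>R q' - (l * \<epsilon>) *\<^sub>R Z (T/\<epsilon>) \<omega>) = l * norm (q' - \<epsilon> *\<^sub>R Z (T/\<epsilon>) \<omega>)"
      using lam by simp
    then have "l * norm (q' - \<epsilon> *\<^sub>R Z (T/\<epsilon>) \<omega>) < l * (d/2)" using w(2) unfolding U_def by (simp add: dist_norm)
    then have "norm (q' - \<epsilon> *\<^sub>R Z (T/\<epsilon>) \<omega>) < d/2" using lam by simp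
    then show "\<epsilon> *\<^sub>R Z (T/\<epsilon>) \<omega> \<in> V" unfolding V_def by (simp add: dist_norm)
  qed
  have Tt: "T/\<epsilon> \<ge> 0" using T epos by simp
  have measV: "{\<omega>\<in>space N. \<epsilon> *\<^sub>R Z (T/\<epsilon>) \<omega> \<in> V} \<in> sets (P z0)"
  proof -
    have "{\<omega>\<in>space (P z0). \<epsilon> *\<^sub>R Z (T/\<epsilon>) \<omega> \<in> V} \<in> sets (P z0)"
      using sm_meas_P[OF m Tt z0(1)] unfolding V_def mem_cball by measurable
    then show ?thesis using sm_basic(3)[OF m z0(1)] by simp
  qed
  have "- ereal j < ereal (l * \<epsilon>) * elog (INF z\<in>{z\<in>E. norm ((l * \<epsilon>) *\<^sub>R z - l *\<^sub>R q) < l * \<delta>}.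
                   emeasure (P z) {\<omega>\<in>space N. (l * \<epsilon>) *\<^sub>R Z (1 / (l * \<epsilon>)) \<omega> \<in> U})"
    using e2(2)[OF epos(5) epos(4)] .
  also have "\<dots> \<le> ereal (l * \<epsilon>) * elog (emeasure (P z0) {\<omega>\<in>space N. (l * \<epsilon>) *\<^sub>R Z (1 / (l * \<epsilon>)) \<omega> \<in> U})"
    using epos by (intro ereal_mult_left_mono elog_mono INF_lower z0set) auto
  also have "\<dots> \<le> ereal (l * \<epsilon>) * elog (emeasure (P z0) {\<omega>\<in>space N. \<epsilon> *\<^sub>R Z (T/\<epsilon>) \<omega> \<in> V})"
    using epos by (intro ereal_mult_left_mono elog_mono emeasure_mono[OF subUV measV]) auto
  also have "\<dots> \<le> ereal (l * \<epsilon>) * elog (ennreal (exp (-c'/\<epsilon>)))"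
    using epos by (intro ereal_mult_left_mono elog_mono up) auto
  also have "\<dots> = ereal (- (l * c'))" using epos by (simp add: elog_exp)
  finally have "l * c' < j" by simp
  then show False using jc' by simp
qed

lemma rate_scaled:
  fixes E :: "'a::euclidean_space set"
  assumes m: "strong_markov_cadlag E N P Z" and h: "H1 E N P Z I"
    and q: "q \<in> scaling_limits E" and lam: "l > 0" and a: "ennreal a < rateI I q q'" and a0: "a \<ge> 0"
  shows "ennreal (l * a) < I 1 (l *\<^sub>R q) (l *\<^sub>R q')"
proof -
  have "rateI I q q' \<le> I (1/l) q q'" unfolding rateI_def using lam by (intro INF_lower) auto
  have "ennreal (l * a) = ennreal l * ennreal a" using lam a0 by (simp add: ennreal_mult)
  also have "\<dots> < ennreal l * rateI I q q'" using lam a by (intro ennreal_mult_strict_left_mono) auto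
  also have "\<dots> \<le> ennreal l * I (1/l) q q'" by (intro mult_left_mono) (fact, simp)
  also have "\<dots> \<le> I 1 (l *\<^sub>R q) (l *\<^sub>R q')" by (rule scaling[OF m h q lam])
  finally show ?thesis .
qed

lemma mid_local:
  fixes E :: "'a::euclidean_space set"
  assumes m: "strong_markov_cadlag E N P Z" and h: "H1 E N P Z I"
    and L: "0 < L0" "L0 \<le> L1" and a': "0 < a'" "a' < b" "b < a"
    and l: "l \<in> {L0..L1}" and la: "ennreal (l*a) < I 1 (l *\<^sub>R q) (l *\<^sub>R q')"
  shows "\<exists>w>0. \<exists>ds>0. \<exists>e>0. \<forall>l'\<in>ball l w. L0 \<le> l' \<longrightarrow> l' \<le> L1 \<longrightarrow> (\<forall>\<delta>. 0<\<delta> \<longrightarrow> \<delta><ds \<longrightarrow>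
      (\<forall>n. n > L1/e \<longrightarrow> (\<forall>t>0. n/t = l' \<longrightarrow> (\<forall>z\<in>E. norm (z - n *\<^sub>R q) < \<delta>*n \<longrightarrow>
        emeasure (P z) {\<omega>\<in>space N. Z t \<omega> \<in> (\<lambda>x. n *\<^sub>R x) ` ball q' \<delta>} \<le> ennreal (exp (-(a'*n)))))))"
proof -
  have l0: "l > 0" "l \<le> L1" using l L by auto
  have a0: "a > 0" using a' by simp
  obtain r where r: "r > 0" "\<And>p'. dist p' (l *\<^sub>R q') < r \<Longrightarrow> ennreal (l*a) < I 1 (l *\<^sub>R q) p'"
    using lsc_ball[OF h1_lsc[OF h, of 1] la] by auto
  define V where "V = cball (l *\<^sub>R q') (r/2)"
  have cV: "\<forall>q''\<in>V. ennreal (l*a) \<le> I 1 (l *\<^sub>R q) q''"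
    using r unfolding V_def by (auto intro!: less_imp_le simp: dist_commute)
  have lb: "l*b < l*a" using l0 a' by simp
  obtain bb where bb: "bb > 0" "\<And>\<delta>. 0<\<delta> \<and> \<delta><bb \<Longrightarrow> (\<exists>\<epsilon>0>0. \<forall>\<epsilon>. 0<\<epsilon> \<and> \<epsilon><\<epsilon>0 \<longrightarrow>
     (\<forall>z\<in>E. norm (\<epsilon> *\<^sub>R z - l *\<^sub>R q) < \<delta> \<longrightarrow>
        emeasure (P z) {\<omega>\<in>space N. \<epsilon> *\<^sub>R Z (1/\<epsilon>) \<omega> \<in> V} \<le> ennreal (exp (-(l*b)/\<epsilon>))))"
    using up_extract[OF h _ _ _ cV lb] l0 a0 unfolding V_def by auto
  define \<delta>l where "\<delta>l = bb/2"
  obtain e where e: "e > 0" "\<And>\<epsilon> z. 0<\<epsilon> \<Longrightarrow> \<epsilon><e \<Longrightarrow> z\<in>E \<Longrightarrow> norm (\<epsilon> *\<^sub>R z - l *\<^sub>R q) < \<delta>l \<Longrightarrow>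
        emeasure (P z) {\<omega>\<in>space N. \<epsilon> *\<^sub>R Z (1/\<epsilon>) \<omega> \<in> V} \<le> ennreal (exp (-(l*b)/\<epsilon>))"
    using bb(2)[of \<delta>l] bb(1) unfolding \<delta>l_def by auto
  have dl: "\<delta>l > 0" using bb by (simp add: \<delta>l_def)
  define w where "w = min (\<delta>l/(2*(norm q+1))) (min (r/(4*(norm q'+1))) (l*(b/a' - 1)))"
  have nq: "norm q + 1 > 0" "norm q' + 1 > 0" by (auto intro: add_nonneg_pos)
  have ba: "b/a' - 1 > 0" using a' by (simp add: field_simps)
  have w: "w > 0" "w \<le> \<delta>l/(2*(norm q+1))" "w \<le> r/(4*(norm q'+1))" "w \<le> l*(b/a' - 1)"
    using dl r nq l0 ba unfolding w_def by (auto intro!: divide_pos_pos mult_pos_pos)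
  define ds where "ds = min (\<delta>l/(2*L1)) (r/(4*L1))"
  have L1p: "L1 > 0" using L by simp
  have ds: "ds > 0" "ds \<le> \<delta>l/(2*L1)" "ds \<le> r/(4*L1)" using dl r L1p unfolding ds_def by auto
  show ?thesis
  proof (rule exI[of _ w], rule conjI[OF w(1)], rule exI[of _ ds], rule conjI[OF ds(1)],
         rule exI[of _ e], rule conjI[OF e(1)], intro ballI allI impI)
    fix l' \<delta> n t z
    assume l': "l' \<in> ball l w" "L0 \<le> l'" "l' \<le> L1" and d: "0 < \<delta>" "\<delta> < ds" and n: "L1/e < n"
      and t: "0 < t" and nt: "n/t = l'" and z: "z \<in> E" and nz: "norm (z - n *\<^sub>R q) < \<delta>*n"
    have l'p: "l' > 0" using l' L by simp
    have npos: "n > 0" using n L1p e(1) by (smt (verit) divide_pos_pos)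
    define \<epsilon> where "\<epsilon> = 1/t"
    have ep: "\<epsilon> = l'/n" using nt t npos by (auto simp: \<epsilon>_def field_simps)
    have epos: "\<epsilon> > 0" using t by (simp add: \<epsilon>_def)
    have "L1/n < e" using n npos e(1) by (simp add: field_simps)
    moreover have "l'/n \<le> L1/n" using l'(3) npos by (simp add: divide_right_mono)
    ultimately have ee: "\<epsilon> < e" using ep by simp
    have dll: "dist l l' < w" using l'(1) by simp
    then have dll': "\<bar>l' - l\<bar> < w" by (simp add: dist_real_def abs_minus_commute)
    have "\<epsilon> *\<^sub>R z - l *\<^sub>R q = (l'/n) *\<^sub>R (z - n *\<^sub>R q) + (l' - l) *\<^sub>R q"
      using npos by (simp add: ep algebra_simps)
    then have "norm (\<epsilon> *\<^sub>R z - l *\<^sub>R q) \<le> (l'/n) * norm (z - n *\<^sub>R q) + \<bar>l' - l\<bar> * norm q"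
      using l'p npos by (metis (no_types, lifting) abs_of_pos divide_pos_pos norm_scaleR norm_triangle_ineq)
    also have "\<dots> < (l'/n) * (\<delta>*n) + \<delta>l/2"
    proof (rule add_less_le_mono)
      show "(l'/n) * norm (z - n *\<^sub>R q) < (l'/n) * (\<delta>*n)" using nz l'p npos by (intro mult_strict_left_mono) auto
      have "\<bar>l' - l\<bar> * norm q \<le> w * norm q" using dll' by (intro mult_right_mono) auto
      also have "\<dots> \<le> \<delta>l/(2*(norm q+1)) * norm q" using w(2) by (intro mult_right_mono) auto
      also have "\<dots> \<le> \<delta>l/2" using dl nq by (simp add: field_simps)
      finally show "\<bar>l' - l\<bar> * norm q \<le> \<delta>l/2" .
    qed
    also have "(l'/n) * (\<delta>*n) = l' * \<delta>" using npos by simp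
    also have "l' * \<delta> \<le> L1 * ds" using l' d l'p by (intro mult_mono) auto
    also have "L1 * ds \<le> \<delta>l/2" using ds(2) L1p by (simp add: field_simps)
    finally have "norm (\<epsilon> *\<^sub>R z - l *\<^sub>R q) < \<delta>l" by simp
    from e(2)[OF epos ee z this]
    have up: "emeasure (P z) {\<omega>\<in>space N. \<epsilon> *\<^sub>R Z t \<omega> \<in> V} \<le> ennreal (exp (-(l*b)/\<epsilon>))"
      by (simp add: \<epsilon>_def)
    have sub: "{\<omega>\<in>space N. Z t \<omega> \<in> (\<lambda>x. n *\<^sub>R x) ` ball q' \<delta>} \<subseteq> {\<omega>\<in>space N. \<epsilon> *\<^sub>R Z t \<omega> \<in> V}"
    proof (intro subsetI CollectI conjI)
      fix \<omega> assume "\<omega> \<in> {\<omega>\<in>space N. Z t \<omega> \<in> (\<lambda>x. n *\<^sub>R x) ` ball q' \<delta>}"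
      then have w1: "\<omega> \<in> space N" and "Z t \<omega> \<in> (\<lambda>x. n *\<^sub>R x) ` ball q' \<delta>" by auto
      then obtain x where x: "x \<in> ball q' \<delta>" "Z t \<omega> = n *\<^sub>R x" by blast
      show "\<omega> \<in> space N" by (rule w1)
      have "\<epsilon> *\<^sub>R Z t \<omega> - l *\<^sub>R q' = l' *\<^sub>R (x - q') + (l' - l) *\<^sub>R q'"
        using npos x(2) by (simp add: ep algebra_simps)
      then have "norm (\<epsilon> *\<^sub>R Z t \<omega> - l *\<^sub>R q') \<le> l' * norm (x - q') + \<bar>l' - l\<bar> * norm q'"
        using l'p by (metis (no_types, lifting) abs_of_pos norm_scaleR norm_triangle_ineq)
      also have "\<dots> \<le> l' * \<delta> + r/4"
      proof (rule add_mono)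
        show "l' * norm (x - q') \<le> l' * \<delta>" using x(1) l'p by (intro mult_left_mono) (auto simp: dist_norm norm_minus_commute)
        have "\<bar>l' - l\<bar> * norm q' \<le> w * norm q'" using dll' by (intro mult_right_mono) auto
        also have "\<dots> \<le> r/(4*(norm q'+1)) * norm q'" using w(3) by (intro mult_right_mono) auto
        also have "\<dots> \<le> r/4" using r nq by (simp add: field_simps)
        finally show "\<bar>l' - l\<bar> * norm q' \<le> r/4" .
      qed
      also have "l' * \<delta> \<le> L1 * ds" using l' d l'p by (intro mult_mono) auto
      also have "L1 * ds \<le> r/4" using ds(3) L1p by (simp add: field_simps)
      finally show "\<epsilon> *\<^sub>R Z t \<omega> \<in> V" unfolding V_def by (simp add: dist_norm norm_minus_commute)
    qed
    have meas: "{\<omega>\<in>space N. \<epsilon> *\<^sub>R Z t \<omega> \<in> V} \<in> sets (P z)"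
    proof -
      have "{\<omega>\<in>space (P z). \<epsilon> *\<^sub>R Z t \<omega> \<in> V} \<in> sets (P z)"
        using sm_meas_P[OF m _ z, of t] t less_imp_le[OF t] unfolding V_def mem_cball by measurable
      then show ?thesis using sm_basic(3)[OF m z] by simp
    qed
    have "exp (-(l*b)/\<epsilon>) \<le> exp (-(a'*n))"
    proof -
      have "l' \<le> l * (b/a')" using dll' w(4) by (simp add: algebra_simps)
      then have "a' * l' \<le> l * b" using a' by (simp add: field_simps)
      have "a' * n = (a' * l') * (n/l')" using l'p by simp
      also have "\<dots> \<le> (l * b) * (n/l')" using \<open>a' * l' \<le> l * b\<close> l'p npos by (intro mult_right_mono) auto
      also have "\<dots> = (l*b)/\<epsilon>" using ep l'p npos by simp
      finally have "a' * n \<le> (l*b)/\<epsilon>" .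
      then show ?thesis by simp
    qed
    then show "emeasure (P z) {\<omega>\<in>space N. Z t \<omega> \<in> (\<lambda>x. n *\<^sub>R x) ` ball q' \<delta>} \<le> ennreal (exp (-(a'*n)))"
      using emeasure_mono[OF sub meas] up by (meson ennreal_leI order_trans)
  qed
qed

lemma mid:
  fixes E :: "'a::euclidean_space set"
  assumes m: "strong_markov_cadlag E N P Z" and h: "H1 E N P Z I"
    and L: "0 < L0" "L0 \<le> L1" and a': "0 < a'" "a' < a"
    and la: "\<forall>l\<in>{L0..L1}. ennreal (l*a) < I 1 (l *\<^sub>R q) (l *\<^sub>R q')"
  obtains \<delta>m nm where "\<delta>m > 0" "\<And>\<delta> n t z. 0<\<delta> \<Longrightarrow> \<delta><\<delta>m \<Longrightarrow> n\<ge>nm \<Longrightarrow> t>0 \<Longrightarrow>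
      L0 \<le> n/t \<Longrightarrow> n/t \<le> L1 \<Longrightarrow> z\<in>E \<Longrightarrow> norm (z - n *\<^sub>R q) < \<delta>*n \<Longrightarrow>
        emeasure (P z) {\<omega>\<in>space N. Z t \<omega> \<in> (\<lambda>x. n *\<^sub>R x) ` ball q' \<delta>} \<le> ennreal (exp (-(a'*n)))"
proof -
  define b where "b = (a' + a)/2"
  have b: "a' < b" "b < a" using a' by (auto simp: b_def)
  define S where "S = {L0..L1}"
  define Q where "Q l w ds e \<longleftrightarrow> (\<forall>l'\<in>ball l w. L0 \<le> l' \<longrightarrow> l' \<le> L1 \<longrightarrow> (\<forall>\<delta>. 0<\<delta> \<longrightarrow> \<delta><ds \<longrightarrow>
      (\<forall>n. n > L1/e \<longrightarrow> (\<forall>t>0. n/t = l' \<longrightarrow> (\<forall>z\<in>E. norm (z - n *\<^sub>R q) < \<delta>*n \<longrightarrow>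
        emeasure (P z) {\<omega>\<in>space N. Z t \<omega> \<in> (\<lambda>x. n *\<^sub>R x) ` ball q' \<delta>} \<le> ennreal (exp (-(a'*n))))))))"
    for l w ds e
  have loc: "\<forall>l\<in>S. \<exists>w. w > 0 \<and> (\<exists>ds. ds > 0 \<and> (\<exists>e. e > 0 \<and> Q l w ds e))"
  proof
    fix l assume l: "l \<in> S"
    from mid_local[OF m h L a'(1) b l[unfolded S_def] la[rule_format, OF l[unfolded S_def]]]
    show "\<exists>w. w > 0 \<and> (\<exists>ds. ds > 0 \<and> (\<exists>e. e > 0 \<and> Q l w ds e))" unfolding Q_def by blast
  qed
  then obtain W where W: "\<forall>l\<in>S. W l > 0 \<and> (\<exists>ds. ds > 0 \<and> (\<exists>e. e > 0 \<and> Q l (W l) ds e))"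
    by (metis bchoice)
  then obtain DS where DS: "\<forall>l\<in>S. W l > 0 \<and> DS l > 0 \<and> (\<exists>e. e > 0 \<and> Q l (W l) (DS l) e)"
    by (metis bchoice)
  then obtain EE where EE: "\<forall>l\<in>S. W l > 0 \<and> DS l > 0 \<and> EE l > 0 \<and> Q l (W l) (DS l) (EE l)"
    by (metis bchoice)
  have cov: "S \<subseteq> (\<Union>c\<in>S. ball c (W c))" using EE by force
  obtain C' where C': "C' \<subseteq> S" "finite C'" "S \<subseteq> (\<Union>c\<in>C'. ball c (W c))"
    using compactE_image[OF _ _ cov] unfolding S_def by (metis compact_Icc open_ball)
  have Sne: "L0 \<in> S" using L by (simp add: S_def)
  then have C'ne: "C' \<noteq> {}" using C'(3) by auto
  define \<delta>m where "\<delta>m = Min (DS ` C')"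
  define nm where "nm = Max ((\<lambda>c. L1 / EE c) ` C') + 1"
  have dm: "\<delta>m > 0" unfolding \<delta>m_def using C' C'ne EE by (subst Min_gr_iff) auto
  show ?thesis
  proof (rule that[OF dm])
    fix \<delta> n t z
    assume d: "0 < \<delta>" "\<delta> < \<delta>m" and n: "nm \<le> n" and t: "0 < t" and l': "L0 \<le> n/t" "n/t \<le> L1"
      and z: "z \<in> E" and nz: "norm (z - n *\<^sub>R q) < \<delta>*n"
    have "n/t \<in> S" using l' by (simp add: S_def)
    then obtain c where c: "c \<in> C'" "n/t \<in> ball c (W c)" using C'(3) by blast
    have cS: "c \<in> S" using c C' by auto
    have "\<delta>m \<le> DS c" unfolding \<delta>m_def using C' c by (intro Min_le) auto
    then have dc: "\<delta> < DS c" using d by simp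
    have "L1 / EE c \<le> Max ((\<lambda>c. L1 / EE c) ` C')" using C' c by (intro Max_ge) auto
    then have nc: "n > L1 / EE c" using n unfolding nm_def by simp
    have "Q c (W c) (DS c) (EE c)" using EE cS by blast
    then show "emeasure (P z) {\<omega>\<in>space N. Z t \<omega> \<in> (\<lambda>x. n *\<^sub>R x) ` ball q' \<delta>} \<le> ennreal (exp (-(a'*n)))"
      unfolding Q_def using c(2) l' d dc nc t z nz by blast
  qed
qed

lemma phi_fin:
  assumes h2: "H2 E P Z" shows "phi E P Z a < \<infinity>"
  using h2 unfolding H2_def phi_def by blast

lemma pow_bound:
  fixes \<Phi> t s0 n :: real
  assumes P: "\<Phi> \<ge> 1" and t: "0 \<le> t" "t \<le> s0 * n" and s0: "s0 * ln \<Phi> \<le> 1" "s0 > 0" and n: "n > 0"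
  shows "\<Phi> ^ Suc (nat \<lceil>t\<rceil>) \<le> \<Phi>^2 * exp n"
proof -
  have k: "real (Suc (nat \<lceil>t\<rceil>)) \<le> t + 2" using t by linarith
  have "\<Phi> ^ Suc (nat \<lceil>t\<rceil>) = \<Phi> powr real (Suc (nat \<lceil>t\<rceil>))" by (rule powr_realpow[symmetric]) (use P in simp)
  also have "\<dots> \<le> \<Phi> powr (t + 2)" using P k by (intro powr_mono) auto
  also have "\<dots> = \<Phi> powr t * \<Phi> powr 2" by (rule powr_add)
  also have "\<Phi> powr 2 = \<Phi>^2" using P by (simp add: powr_numeral)
  also have "\<Phi> powr t * \<Phi>^2 = \<Phi>^2 * \<Phi> powr t" by (rule mult.commute)
  also have "\<Phi> powr t = exp (t * ln \<Phi>)" using P by (simp add: powr_def)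
  also have "t * ln \<Phi> \<le> n"
  proof -
    have l0: "ln \<Phi> \<ge> 0" using P by simp
    have "t * ln \<Phi> \<le> (s0 * n) * ln \<Phi>" using t l0 by (intro mult_right_mono) auto
    also have "\<dots> = (s0 * ln \<Phi>) * n" by simp
    also have "\<dots> \<le> 1 * n" using s0 n by (intro mult_right_mono) auto
    finally show ?thesis by simp
  qed
  then have "exp (t * ln \<Phi>) \<le> exp n" by simp
  then have "\<Phi>^2 * exp (t * ln \<Phi>) \<le> \<Phi>^2 * exp n" by (intro mult_left_mono) auto
  finally show ?thesis .
qed

lemma small_time:
  fixes E :: "'a::euclidean_space set"
  assumes m: "strong_markov_cadlag E N P Z" and h2: "H2 E P Z" and y0: "y0 \<in> E"
    and D: "norm (q' - q) = D" "D > 0" and A: "A \<ge> 0"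
  obtains s0 Cs where "s0 > 0" "Cs > 0" "\<And>n \<delta> t z. n > 0 \<Longrightarrow> 0 < \<delta> \<Longrightarrow> \<delta> \<le> D/4 \<Longrightarrow>
      0 \<le> t \<Longrightarrow> t \<le> s0*n \<Longrightarrow> z \<in> E \<Longrightarrow> norm (z - n *\<^sub>R q) < \<delta>*n \<Longrightarrow>
        emeasure (P z) {\<omega>\<in>space N. Z t \<omega> \<in> (\<lambda>x. n *\<^sub>R x) ` ball q' \<delta>} \<le> ennreal (Cs * exp (-(A*n)))"
proof -
  define d where "d = real DIM('a)"
  have dpos: "d > 0" by (simp add: d_def)
  define \<theta> where "\<theta> = 2 * d * (A+1) / D"
  have th: "\<theta> \<ge> 0" using dpos A D by (simp add: \<theta>_def)
  define \<Phi> where "\<Phi> = 1 + (\<Sum>i\<in>(Basis::'a set). enn2real (phi E P Z (\<theta> *\<^sub>R i)) + enn2real (phi E P Z (-(\<theta> *\<^sub>R i))))"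
  have Phi1: "\<Phi> \<ge> 1" unfolding \<Phi>_def by (simp add: sum_nonneg)
  have phb: "\<forall>i\<in>Basis. phi E P Z (\<theta> *\<^sub>R i) \<le> ennreal \<Phi> \<and> phi E P Z (-(\<theta> *\<^sub>R i)) \<le> ennreal \<Phi>"
  proof
    fix i :: 'a assume i: "i \<in> Basis"
    have le: "enn2real (phi E P Z (\<theta> *\<^sub>R i)) + enn2real (phi E P Z (-(\<theta> *\<^sub>R i))) \<le> \<Phi> - 1"
      unfolding \<Phi>_def using i
      by (simp add: member_le_sum[of i Basis "\<lambda>i. enn2real (phi E P Z (\<theta> *\<^sub>R i)) + enn2real (phi E P Z (-(\<theta> *\<^sub>R i)))"])
    have f1: "phi E P Z (\<theta> *\<^sub>R i) = ennreal (enn2real (phi E P Z (\<theta> *\<^sub>R i)))"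
      using phi_fin[OF h2] by (simp add: ennreal_enn2real_if less_top[symmetric])
    have f2: "phi E P Z (-(\<theta> *\<^sub>R i)) = ennreal (enn2real (phi E P Z (-(\<theta> *\<^sub>R i))))"
      using phi_fin[OF h2] by (simp add: ennreal_enn2real_if less_top[symmetric])
    show "phi E P Z (\<theta> *\<^sub>R i) \<le> ennreal \<Phi> \<and> phi E P Z (-(\<theta> *\<^sub>R i)) \<le> ennreal \<Phi>"
    proof -
      have "enn2real (phi E P Z (\<theta> *\<^sub>R i)) \<le> \<Phi>" "enn2real (phi E P Z (-(\<theta> *\<^sub>R i))) \<le> \<Phi>"
        using le enn2real_nonneg[of "phi E P Z (\<theta> *\<^sub>R i)"] enn2real_nonneg[of "phi E P Z (-(\<theta> *\<^sub>R i))"] by linarith+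
      then show ?thesis by (subst f1, subst f2) (auto intro!: ennreal_leI)
    qed
  qed
  define s0 where "s0 = 1 / (1 + ln \<Phi>)"
  have lnp: "ln \<Phi> \<ge> 0" using Phi1 by simp
  have s0: "s0 > 0" "s0 * ln \<Phi> \<le> 1" using lnp by (auto simp: s0_def field_simps)
  define Cs where "Cs = 2 * d * \<Phi>^2"
  have Cs: "Cs > 0" using dpos Phi1 by (simp add: Cs_def)
  show ?thesis
  proof (rule that[OF s0(1) Cs])
    fix n \<delta> t z
    assume n: "0 < n" and d: "0 < \<delta>" "\<delta> \<le> D/4" and t: "0 \<le> t" "t \<le> s0 * n" and z: "z \<in> E"
      and nz: "norm (z - n *\<^sub>R q) < \<delta> * n"
    define k where "k = nat \<lceil>t\<rceil>"
    have u: "t \<in> {0..real (Suc k)}" using t by (auto simp: k_def) linarith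
    have sub: "{\<omega>\<in>space N. Z t \<omega> \<in> (\<lambda>x. n *\<^sub>R x) ` ball q' \<delta>} \<subseteq> {\<omega>\<in>space N. n * D / 2 \<le> norm (Z t \<omega> - z)}"
    proof (intro subsetI CollectI conjI)
      fix \<omega> assume "\<omega> \<in> {\<omega>\<in>space N. Z t \<omega> \<in> (\<lambda>x. n *\<^sub>R x) ` ball q' \<delta>}"
      then have w1: "\<omega> \<in> space N" and "Z t \<omega> \<in> (\<lambda>x. n *\<^sub>R x) ` ball q' \<delta>" by auto
      then obtain x where x: "x \<in> ball q' \<delta>" "Z t \<omega> = n *\<^sub>R x" by blast
      show "\<omega> \<in> space N" by (rule w1)
      have eq: "n *\<^sub>R (q' - q) = (Z t \<omega> - z) - n *\<^sub>R (x - q') + (z - n *\<^sub>R q)"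
        using x(2) by (simp add: algebra_simps)
      have "n * D = norm (n *\<^sub>R (q' - q))" using n D by simp
      also have "\<dots> \<le> norm (Z t \<omega> - z) + norm (n *\<^sub>R (x - q')) + norm (z - n *\<^sub>R q)"
        unfolding eq using norm_triangle_ineq[of "(Z t \<omega> - z) - n *\<^sub>R (x - q')" "z - n *\<^sub>R q"]
          norm_triangle_ineq4[of "Z t \<omega> - z" "n *\<^sub>R (x - q')"] by linarith
      finally have tri: "n * D \<le> norm (Z t \<omega> - z) + norm (n *\<^sub>R (x - q')) + norm (z - n *\<^sub>R q)" .
      have "norm (n *\<^sub>R (x - q')) \<le> n * \<delta>" using x(1) n
        by (simp add: dist_norm norm_minus_commute less_imp_le)
      then have "n * D \<le> norm (Z t \<omega> - z) + n * \<delta> + \<delta> * n" using nz tri by linarith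
      moreover have "n * \<delta> \<le> n * (D/4)" using d n by (intro mult_left_mono) auto
      ultimately show "n * D / 2 \<le> norm (Z t \<omega> - z)" by (simp add: algebra_simps)
    qed
    have meas: "{\<omega>\<in>space N. n * D / 2 \<le> norm (Z t \<omega> - z)} \<in> sets (P z)"
    proof -
      have "{\<omega>\<in>space (P z). n * D / 2 \<le> norm (Z t \<omega> - z)} \<in> sets (P z)"
        using sm_meas_P[OF m t(1) z] by measurable
      then show ?thesis using sm_basic(3)[OF m z] by simp
    qed
    have "emeasure (P z) {\<omega>\<in>space N. Z t \<omega> \<in> (\<lambda>x. n *\<^sub>R x) ` ball q' \<delta>}
        \<le> emeasure (P z) {\<omega>\<in>space N. n * D / 2 \<le> norm (Z t \<omega> - z)}"
      by (rule emeasure_mono[OF sub meas])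
    also have "\<dots> \<le> ennreal (2 * DIM('a) * \<Phi> ^ Suc k * exp (-\<theta>*((n * D / 2)/DIM('a))))"
      by (rule chernoff[OF m z u th _ phb]) (use Phi1 in simp)
    also have "\<dots> \<le> ennreal (Cs * exp (-(A*n)))"
    proof (rule ennreal_leI)
      have e: "-\<theta>*((n * D / 2)/DIM('a)) = -((A+1)*n)" using dpos D by (simp add: \<theta>_def d_def field_simps)
      have pb: "\<Phi> ^ Suc k \<le> \<Phi>^2 * exp n" unfolding k_def by (rule pow_bound[OF Phi1 t s0(2) s0(1) n])
      have "2 * DIM('a) * \<Phi> ^ Suc k * exp (-\<theta>*((n * D / 2)/DIM('a))) = 2 * d * \<Phi> ^ Suc k * exp (-((A+1)*n))"
        unfolding e d_def by simp
      also have "\<dots> \<le> 2 * d * (\<Phi>^2 * exp n) * exp (-((A+1)*n))"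
        using pb dpos by (intro mult_right_mono mult_left_mono) auto
      also have "\<dots> = Cs * (exp n * exp (-((A+1)*n)))" by (simp add: Cs_def)
      also have "exp n * exp (-((A+1)*n)) = exp (-(A*n))" by (simp add: exp_add[symmetric] algebra_simps)
      finally show "2 * DIM('a) * \<Phi> ^ Suc k * exp (-\<theta>*((n * D / 2)/DIM('a))) \<le> Cs * exp (-(A*n))" .
    qed
    finally show "emeasure (P z) {\<omega>\<in>space N. Z t \<omega> \<in> (\<lambda>x. n *\<^sub>R x) ` ball q' \<delta>} \<le> ennreal (Cs * exp (-(A*n)))" .
  qed
qed

lemma L1:
  fixes E :: "'a::euclidean_space set"
  assumes m: "strong_markov_cadlag E N P Z" and h: "H1 E N P Z I" and h2: "H2 E P Z"
    and pos: "\<exists>T>0. I T 0 0 > 0" and q: "q \<in> scaling_limits E" and qq: "q \<noteq> q'"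
    and \<alpha>0: "\<alpha> \<ge> 0" and \<alpha>: "ennreal \<alpha> < rateI I q q'"
  shows "Limsup (at_right 0) (\<lambda>\<delta>::real. Limsup at_top (\<lambda>n::real.
           SUP z\<in>{z\<in>E. norm (z - n *\<^sub>R q) < \<delta> * n}.
             ereal (1 / n) * elog (green N P Z z ((\<lambda>x. n *\<^sub>R x) ` ball q' \<delta>)))) \<le> ereal (-\<alpha>)"
proof (rule limsup_goal)
  obtain x where x: "ennreal \<alpha> < x" "x < rateI I q q'" using dense[OF \<alpha>] by blast
  have xt: "x < top" using x(2) top.not_eq_extremum by fastforce
  define a where "a = enn2real x"
  have xa: "x = ennreal a" and a0: "a \<ge> 0" using xt by (auto simp: a_def)
  have aa: "\<alpha> < a" using x(1) xa \<alpha>0 by (simp add: ennreal_less_iff)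
  have arate: "ennreal a < rateI I q q'" using x(2) xa by simp
  define a1 where "a1 = (\<alpha> + a)/2"
  have a1: "\<alpha> < a1" "a1 < a" "a1 > 0" using aa \<alpha>0 by (auto simp: a1_def)
  obtain \<kappa> \<rho> \<beta> t0 where kp: "\<kappa> > 0" "\<rho> > 0" "\<beta> > 0" "t0 > 0"
    and pb: "\<And>t z. t > t0 \<Longrightarrow> z \<in> E \<Longrightarrow> norm z < \<kappa>*t \<Longrightarrow>
           emeasure (P z) {\<omega>\<in>space N. norm (Z t \<omega>) \<le> \<rho>*t} \<le> ennreal (exp (-(\<beta>*t)))"
    using pos_lemma[OF h pos] by blast
  define D where "D = norm (q' - q)"
  have D: "D > 0" using qq by (simp add: D_def)
  obtain zz where "(\<forall>\<epsilon>>0. zz \<epsilon> \<in> E)" "((\<lambda>\<epsilon>. \<epsilon> *\<^sub>R zz \<epsilon>) \<longlongrightarrow> q) (at_right 0)"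
    using q unfolding scaling_limits_def by blast
  then have y0: "zz 1 \<in> E" by simp
  obtain s0 Cs where s0: "s0 > 0" and Cs: "Cs > 0" and sm: "\<And>n \<delta> t z. n > 0 \<Longrightarrow> 0 < \<delta> \<Longrightarrow> \<delta> \<le> D/4 \<Longrightarrow>
      0 \<le> t \<Longrightarrow> t \<le> s0*n \<Longrightarrow> z \<in> E \<Longrightarrow> norm (z - n *\<^sub>R q) < \<delta>*n \<Longrightarrow>
        emeasure (P z) {\<omega>\<in>space N. Z t \<omega> \<in> (\<lambda>x. n *\<^sub>R x) ` ball q' \<delta>} \<le> ennreal (Cs * exp (-(a1*n)))"
    apply (rule small_time[OF m h2 y0 D_def[symmetric] D less_imp_le[OF a1(3)]])
    subgoal premises prems for s0 Cs by (rule prems(1)[OF prems(2) prems(3) prems(4)])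
    done
  define K where "K = max (s0 + 1) (max ((norm q + 1)/\<kappa>) (max ((norm q' + 1)/\<rho>) (2*a1/\<beta>)))"
  have K: "K \<ge> s0 + 1" "K \<ge> (norm q + 1)/\<kappa>" "K \<ge> (norm q' + 1)/\<rho>" "K \<ge> 2*a1/\<beta>"
    by (auto simp: K_def)
  have Kp: "K > 0" using K(1) s0 by simp
  have la: "\<forall>l\<in>{1/K..1/s0}. ennreal (l*a) < I 1 (l *\<^sub>R q) (l *\<^sub>R q')"
  proof
    fix l assume "l \<in> {1/K..1/s0}"
    then have "l > 0" using Kp by (smt (verit) atLeastAtMost_iff divide_pos_pos)
    then show "ennreal (l*a) < I 1 (l *\<^sub>R q) (l *\<^sub>R q')" by (rule rate_scaled[OF m h q _ arate a0])
  qed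
  have LL: "0 < 1/K" "1/K \<le> 1/s0" using Kp s0 K(1) by (auto simp: field_simps)
  obtain \<delta>m nm where dm: "\<delta>m > 0" and mid: "\<And>\<delta> n t z. 0<\<delta> \<Longrightarrow> \<delta><\<delta>m \<Longrightarrow> n\<ge>nm \<Longrightarrow> t>0 \<Longrightarrow>
      1/K \<le> n/t \<Longrightarrow> n/t \<le> 1/s0 \<Longrightarrow> z\<in>E \<Longrightarrow> norm (z - n *\<^sub>R q) < \<delta>*n \<Longrightarrow>
        emeasure (P z) {\<omega>\<in>space N. Z t \<omega> \<in> (\<lambda>x. n *\<^sub>R x) ` ball q' \<delta>} \<le> ennreal (exp (-(a1*n)))"
    apply (rule mid[OF m h LL a1(3) a1(2) la])
    subgoal premises prems for \<delta>m nm by (rule prems(1)[OF prems(2) prems(3)])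
    done
  define C1 where "C1 = Cs + 1"
  have C1: "C1 > 0" "C1 \<ge> Cs" "C1 \<ge> 1" using Cs by (auto simp: C1_def)
  obtain N0 where N0: "\<And>n. n \<ge> N0 \<Longrightarrow> ln (2/\<beta> + (C1*K) * n) / n \<le> a1 - \<alpha>"
  proof -
    have "2/\<beta> > 0" "C1*K > 0" "a1 - \<alpha> > 0" using kp C1 Kp a1 by auto
    then show ?thesis using ln_lin_small[of "2/\<beta>" "C1*K" "a1 - \<alpha>"] that by (auto simp: eventually_at_top_linorder)
  qed
  show "\<exists>\<delta>1>0. \<forall>\<delta>. 0 < \<delta> \<and> \<delta> < \<delta>1 \<longrightarrow> (\<exists>n1. \<forall>n\<ge>n1. \<forall>z\<in>{z \<in> E. norm (z - n *\<^sub>R q) < \<delta> * n}.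
      ereal (1 / n) * elog (green N P Z z ((*\<^sub>R) n ` ball q' \<delta>)) \<le> ereal (- \<alpha>))"
  proof (rule exI[of _ "min \<delta>m (min (D/4) 1)"], intro conjI allI impI)
    show "min \<delta>m (min (D/4) 1) > 0" using dm D by simp
    fix \<delta> :: real assume d: "0 < \<delta> \<and> \<delta> < min \<delta>m (min (D/4) 1)"
    show "\<exists>n1. \<forall>n\<ge>n1. \<forall>z\<in>{z \<in> E. norm (z - n *\<^sub>R q) < \<delta> * n}.
      ereal (1 / n) * elog (green N P Z z ((*\<^sub>R) n ` ball q' \<delta>)) \<le> ereal (- \<alpha>)"
    proof (rule exI[of _ "max nm (max 1 (max (t0/K) N0))"], intro allI impI ballI)
      fix n :: real and z assume n: "n \<ge> max nm (max 1 (max (t0/K) N0))" and z: "z \<in> {z \<in> E. norm (z - n *\<^sub>R q) < \<delta> * n}"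
      have npos: "n > 0" using n by simp
      have zE: "z \<in> E" and nzq: "norm (z - n *\<^sub>R q) < \<delta> * n" using z by auto
      have nz: "norm z < n * (norm q + 1)" using start_norm[OF nzq _ ] npos d by simp
      define L where "L = K * n"
      have L0: "L \<ge> 0" using Kp npos by (simp add: L_def)
      define av where "av = C1 * exp (-(a1*n))"
      define bv where "bv = exp (-(\<beta>*K*n/2))"
      have bnd: "emeasure (P z) {\<omega>\<in>space N. Z t \<omega> \<in> (\<lambda>x. n *\<^sub>R x) ` ball q' \<delta>} \<le> ennreal (if t \<le> L then av else bv * exp (-((\<beta>/2)*t)))"
        if t: "t \<ge> 0" for t
      proof (cases "t \<le> s0 * n")
        case True
        have "emeasure (P z) {\<omega>\<in>space N. Z t \<omega> \<in> (\<lambda>x. n *\<^sub>R x) ` ball q' \<delta>} \<le> ennreal (Cs * exp (-(a1*n)))"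
          by (rule sm[OF npos _ _ t True zE nzq]) (use d in auto)
        also have "\<dots> \<le> ennreal av" unfolding av_def using C1 by (intro ennreal_leI mult_right_mono) auto
        finally have r: "emeasure (P z) {\<omega>\<in>space N. Z t \<omega> \<in> (\<lambda>x. n *\<^sub>R x) ` ball q' \<delta>} \<le> ennreal av" .
        have "s0 * n \<le> K * n" using K(1) npos by (intro mult_right_mono) auto
        then have "t \<le> L" using True unfolding L_def by simp
        then show ?thesis using r by simp
      next
        case ts: False
        show ?thesis
        proof (cases "t \<le> L")
          case True
          have tp: "t > 0" using ts s0 npos by (smt (verit) mult_pos_pos)
          have "1/K \<le> n/t" using True Kp npos tp unfolding L_def by (simp add: field_simps)
          moreover have "n/t \<le> 1/s0" using ts s0 npos tp by (simp add: field_simps)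
          ultimately have "emeasure (P z) {\<omega>\<in>space N. Z t \<omega> \<in> (\<lambda>x. n *\<^sub>R x) ` ball q' \<delta>} \<le> ennreal (exp (-(a1*n)))"
            using mid[OF _ _ _ tp _ _ zE nzq] d n by auto
          also have "\<dots> \<le> ennreal av" unfolding av_def using C1 by (intro ennreal_leI) auto
          finally show ?thesis using True by simp
        next
          case False
          have tt0: "t > t0"
          proof -
            have "t0 \<le> K * n" using n Kp by (simp add: field_simps)
            then show ?thesis using False unfolding L_def by simp
          qed
          have "n * (norm q + 1) \<le> \<kappa> * L"
          proof -
            have "n * (norm q + 1) = \<kappa> * ((norm q + 1)/\<kappa> * n)" using kp by simp
            also have "\<dots> \<le> \<kappa> * L" using kp npos K(2) unfolding L_def
              by (intro mult_left_mono mult_right_mono) auto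
            finally show ?thesis .
          qed
          then have zk: "norm z < \<kappa> * t" using nz False kp by (smt (verit) mult_strict_left_mono)
          have "n * (norm q' + 1) \<le> \<rho> * L"
          proof -
            have "n * (norm q' + 1) = \<rho> * ((norm q' + 1)/\<rho> * n)" using kp by simp
            also have "\<dots> \<le> \<rho> * L" using kp npos K(3) unfolding L_def
              by (intro mult_left_mono mult_right_mono) auto
            finally show ?thesis .
          qed
          then have rl: "n * (norm q' + 1) \<le> \<rho> * t" using False kp by (smt (verit) mult_strict_left_mono)
          have sub: "{\<omega>\<in>space N. Z t \<omega> \<in> (\<lambda>x. n *\<^sub>R x) ` ball q' \<delta>} \<subseteq> {\<omega>\<in>space N. norm (Z t \<omega>) \<le> \<rho>*t}"
          proof (intro subsetI CollectI conjI)
            fix \<omega> assume "\<omega> \<in> {\<omega>\<in>space N. Z t \<omega> \<in> (\<lambda>x. n *\<^sub>R x) ` ball q' \<delta>}"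
            then have w: "\<omega> \<in> space N" "Z t \<omega> \<in> (\<lambda>x. n *\<^sub>R x) ` ball q' \<delta>" by auto
            have "n \<ge> 0" "\<delta> \<le> 1" using npos d by auto
            from scaled_ball_norm[OF w(2) this] rl show "norm (Z t \<omega>) \<le> \<rho>*t" by simp
            show "\<omega> \<in> space N" by (rule w(1))
          qed
          have meas: "{\<omega>\<in>space N. norm (Z t \<omega>) \<le> \<rho>*t} \<in> sets (P z)"
          proof -
            have "{\<omega>\<in>space (P z). norm (Z t \<omega>) \<le> \<rho>*t} \<in> sets (P z)"
              using sm_meas_P[OF m t zE] by measurable
            then show ?thesis using sm_basic(3)[OF m zE] by simp
          qed
          have "emeasure (P z) {\<omega>\<in>space N. Z t \<omega> \<in> (\<lambda>x. n *\<^sub>R x) ` ball q' \<delta>} \<le> emeasure (P z) {\<omega>\<in>space N. norm (Z t \<omega>) \<le> \<rho>*t}"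
            by (rule emeasure_mono[OF sub meas])
          also have "\<dots> \<le> ennreal (exp (-(\<beta>*t)))" by (rule pb[OF tt0 zE zk])
          also have "\<dots> \<le> ennreal (bv * exp (-((\<beta>/2)*t)))"
          proof (rule ennreal_leI)
            have "\<beta>*K*n/2 \<le> \<beta>*t/2" using False kp unfolding L_def by (simp add: mult_left_mono)
            then have "-(\<beta>*t) \<le> -(\<beta>*K*n/2) + -((\<beta>/2)*t)" by simp
            then show "exp (-(\<beta>*t)) \<le> bv * exp (-((\<beta>/2)*t))" unfolding bv_def by (simp add: exp_add[symmetric])
          qed
          finally show ?thesis using False by simp
        qed
      qed
      have G: "green N P Z z ((\<lambda>x. n *\<^sub>R x) ` ball q' \<delta>) \<le> ennreal (av * L + bv / (\<beta>/2))"
        by (rule green_bound[where a=av and bb=bv and g="\<beta>/2" and P=P and z=z and N=N and Z=Z and L=L and A="(\<lambda>x. n *\<^sub>R x) ` ball q' \<delta>", OF bnd L0])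
           (use kp C1 in \<open>auto simp: av_def bv_def\<close>)
      define Bv where "Bv = (2/\<beta> + (C1*K) * n) * exp (-(a1*n))"
      have "av * L + bv / (\<beta>/2) \<le> Bv"
      proof -
        have "bv \<le> exp (-(a1*n))"
        proof -
          have "a1 * n \<le> (\<beta>*K/2) * n" using K(4) kp npos by (intro mult_right_mono) (auto simp: field_simps)
          then show ?thesis unfolding bv_def by simp
        qed
        then have "bv / (\<beta>/2) \<le> exp (-(a1*n)) * (2/\<beta>)" using kp by (simp add: field_simps)
        moreover have "av * L = (C1*K) * n * exp (-(a1*n))" unfolding av_def L_def by simp
        ultimately show ?thesis unfolding Bv_def by (simp add: algebra_simps)
      qed
      then have G2: "green N P Z z ((\<lambda>x. n *\<^sub>R x) ` ball q' \<delta>) \<le> ennreal Bv"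
        using G by (meson ennreal_leI order_trans)
      have Bpos: "Bv > 0" unfolding Bv_def using kp C1 Kp npos by (intro mult_pos_pos add_pos_nonneg) auto
      have "ln Bv / n = ln (2/\<beta> + (C1*K) * n) / n - a1"
      proof -
        have "2/\<beta> + (C1*K) * n > 0" using kp C1 Kp npos by (intro add_pos_nonneg) auto
        then have "ln Bv = ln (2/\<beta> + (C1*K) * n) - a1 * n" unfolding Bv_def by (simp add: ln_mult)
        then show ?thesis using npos by (simp add: field_simps)
      qed
      also have "\<dots> \<le> -\<alpha>" using N0[of n] n by simp
      finally have "ln Bv / n \<le> -\<alpha>" .
      then show "ereal (1 / n) * elog (green N P Z z ((*\<^sub>R) n ` ball q' \<delta>)) \<le> ereal (- \<alpha>)"
        using elog_final[OF npos G2 Bpos] by simp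
    qed
  qed
qed

theorem mainTheorem9:
  fixes E :: "'a::euclidean_space set" and N :: "'w measure" and P :: "'a \<Rightarrow> 'w measure"
    and Z :: "real \<Rightarrow> 'w \<Rightarrow> 'a" and I :: "real \<Rightarrow> 'a \<Rightarrow> 'a \<Rightarrow> ennreal"
    and q q' :: 'a
  assumes unbdd: "\<not> bounded E"
    and markov: "strong_markov_cadlag E N P Z"
    and green_fin: "\<forall>z\<in>E. \<forall>B. compact B \<longrightarrow> green N P Z z B < \<infinity>"
    and h1: "H1 E N P Z I"
    and h2: "H2 E P Z"
    and pos: "\<exists>T>0. I T 0 0 > 0"
    and q: "q \<in> scaling_limits E" and q': "q' \<in> scaling_limits E"
  shows "Limsup (at_right 0) (\<lambda>\<delta>::real. Limsup at_top (\<lambda>n::real.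
           SUP z\<in>{z\<in>E. norm (z - n *\<^sub>R q) < \<delta> * n}.
             ereal (1 / n) * elog (green N P Z z ((\<lambda>x. n *\<^sub>R x) ` ball q' \<delta>))))
         \<le> - enn2ereal (rateI_hat I q q')"
proof (rule ccontr)
  let ?X = "Limsup (at_right 0) (\<lambda>\<delta>::real. Limsup at_top (\<lambda>n::real.
           SUP z\<in>{z\<in>E. norm (z - n *\<^sub>R q) < \<delta> * n}.
             ereal (1 / n) * elog (green N P Z z ((\<lambda>x. n *\<^sub>R x) ` ball q' \<delta>))))"
  let ?R = "rateI_hat I q q'"
  have key: "?X \<le> ereal (-\<alpha>)" if a: "ereal \<alpha> < enn2ereal ?R" for \<alpha>
  proof (cases "\<alpha> < 0")
    case True
    then show ?thesis by (rule L0[OF markov h1 pos])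
  next
    case False
    then have a0: "\<alpha> \<ge> 0" by simp
    have Rpos: "enn2ereal ?R > 0" using a a0 by (meson ereal_less_eq(5) le_less_trans)
    then have qq: "q \<noteq> q'" unfolding rateI_hat_def by (auto simp: zero_ennreal.rep_eq)
    then have "ereal \<alpha> < enn2ereal (rateI I q q')" using a unfolding rateI_hat_def by simp
    then have "ennreal \<alpha> < rateI I q q'" using a0 by (metis enn2ereal_ennreal less_ennreal.rep_eq)
    then show ?thesis by (rule L1[OF markov h1 h2 pos q qq a0])
  qed
  assume "\<not> ?X \<le> - enn2ereal ?R"
  then have lt: "- enn2ereal ?R < ?X" by simp
  then obtain y where y: "- enn2ereal ?R < y" "y < ?X" using dense by blast
  have "y \<noteq> -\<infinity>" using y(1) by auto
  moreover have "y \<noteq> \<infinity>" using y(2) by auto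
  ultimately obtain r where r: "y = ereal r" by (cases y) auto
  have "ereal (-r) < enn2ereal ?R" using y(1) r by (metis ereal_minus_less_minus ereal_uminus_uminus uminus_ereal.simps(1))
  from key[OF this] have "?X \<le> ereal r" by simp
  then show False using y(2) r by simp
qed

end
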